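(* Fix $r\ge5$. For every integer $k\ge1$ such that $k-1$ is divisible by $\binom r2-1$, setting $q=\frac{k-1}{\binom r2-1}$, the number $b(k)$ of (labelled) balanced $k$-TWGs for a given edge $e$ with vertex set equal to a given set of size $(r-2)k+2$ containing the endpoints of $e$ satisfies \[ b(k)=\frac{((r-2)k)!}{(r-2)!}\left(\frac{t(q)}{((r-2)q)!}\right)^{\binom r2-1}, \] where $t(q)$ denotes the number of (labelled) $q$-TWGs for a given edge on a given vertex set of size $(r-2)q+2$.
   Context: Tree witness graphs (TWGs) are defined recursively: a graph $T$ is a TWG for the edge $e$ if either $T=e$ (the single edge with its two endpoints), or there is a copy $H$ of $K_r$ with $e\in E(H)$ and, for each $f\in E(H)\setminus\{e\}$, a TWG $T_f$ for $f$, such that $T_f$ and $T_{f'}$ are vertex disjoint outside $V(H)$ for all $f\ne f'$, and $T=\bigcup_{f\in E(H)\setminus\{e\}}T_f$ ($H$ is the root and the $\binom r2-1$ graphs $T_f$ are the primal branches). The order $\vartheta(T)$ is $0$ if $T$ is a single edge and otherwise $1+\sum_f\vartheta(T_f)$; a $k$-TWG is a TWG of order $k$. A TWG (of order $\ge1$) is balanced if all its primal branches have the same order (the primal branches themselves need not be balanced). *)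

theory Defs
  imports Complex_Main
begin

text \<open>Graphs are pairs (vertex set, edge set); an edge is a 2-element vertex set.\<close>

definition edges_of :: "'a set \<Rightarrow> 'a set set" where
  "edges_of K = {f. f \<subseteq> K \<and> card f = 2}"

inductive twg :: "nat \<Rightarrow> 'a set \<Rightarrow> ('a set \<times> 'a set set) \<Rightarrow> nat \<Rightarrow> bool" for r where
  base: "card e = 2 \<Longrightarrow> twg r e (e, {e}) 0"
| step: "\<lbrakk> finite K; card K = r; e \<subseteq> K; card e = 2;
          \<forall>f \<in> edges_of K - {e}. twg r f (Tg f) (ord f);
          \<forall>f \<in> edges_of K - {e}. \<forall>f' \<in> edges_of K - {e}. f \<noteq> f' \<longrightarrow>
              fst (Tg f) \<inter> fst (Tg f') \<subseteq> K \<rbrakk>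
        \<Longrightarrow> twg r e ((\<Union>f \<in> edges_of K - {e}. fst (Tg f)), (\<Union>f \<in> edges_of K - {e}. snd (Tg f)))
                 (1 + (\<Sum>f \<in> edges_of K - {e}. ord f))"

definition btwg :: "nat \<Rightarrow> 'a set \<Rightarrow> ('a set \<times> 'a set set) \<Rightarrow> nat \<Rightarrow> bool" where
  "btwg r e T k \<longleftrightarrow> (\<exists>K Tg j. finite K \<and> card K = r \<and> e \<subseteq> K \<and> card e = 2 \<and>
      (\<forall>f \<in> edges_of K - {e}. twg r f (Tg f) j) \<and>
      (\<forall>f \<in> edges_of K - {e}. \<forall>f' \<in> edges_of K - {e}. f \<noteq> f' \<longrightarrow>
              fst (Tg f) \<inter> fst (Tg f') \<subseteq> K) \<and>
      T = ((\<Union>f \<in> edges_of K - {e}. fst (Tg f)), (\<Union>f \<in> edges_of K - {e}. snd (Tg f))) \<and>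
      k = 1 + (\<Sum>f \<in> edges_of K - {e}. j))"

end

theory Submission
  imports Defs
begin
lemma edges_of_iff: "f \<in> edges_of K \<longleftrightarrow> f \<subseteq> K \<and> card f = 2"
  by (simp add: edges_of_def)

lemma finite_edges_of: "finite K \<Longrightarrow> finite (edges_of K)"
  unfolding edges_of_def by (rule finite_subset[of _ "Pow K"]) auto

lemma card_edges_of: "finite K \<Longrightarrow> card (edges_of K) = card K choose 2"
  unfolding edges_of_def using n_subsets by blast

lemma cover_K:
  assumes "finite K" "card K \<ge> 3" "e \<subseteq> K" "card e = 2" "x \<in> K"
  shows "\<exists>f\<in>edges_of K - {e}. x \<in> f"
proof (cases "x \<in> e")
  case True
  have "card (K - e) \<ge> 1" using assms by (simp add: card_Diff_subset finite_subset)
  then have "K - e \<noteq> {}" by (metis card.empty not_one_le_zero)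
  then obtain y where y: "y \<in> K - e" by blast
  then have "x \<noteq> y" using True by auto
  then have "{x,y} \<in> edges_of K - {e}" using y assms True by (auto simp: edges_of_iff)
  then show ?thesis by auto
next
  case False
  obtain a b where ab: "e = {a,b}" "a \<noteq> b" using assms(4) card_2_iff by metis
  then have "x \<noteq> a" using False by auto
  then have "{x,a} \<in> edges_of K - {e}" using ab assms False by (auto simp: edges_of_iff)
  then show ?thesis by auto
qed

lemma K_sub_Union:
  assumes "finite K" "card K \<ge> 3" "e \<subseteq> K" "card e = 2"
  shows "K \<subseteq> (\<Union>f\<in>edges_of K - {e}. f)"
  using cover_K[OF assms] by blast

lemma step_card_gen:
  fixes Vs :: "'a set \<Rightarrow> 'a set" and ord :: "'a set \<Rightarrow> nat"
  assumes K: "finite K" "card K = r" "3 \<le> r"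
  and fE: "finite E" and Ecard: "\<forall>f\<in>E. card f = 2 \<and> f \<subseteq> K" and KE: "K \<subseteq> \<Union>E"
  and br: "\<forall>f\<in>E. finite (Vs f) \<and> f \<subseteq> Vs f \<and> card (Vs f) \<le> (r-2)*ord f + 2"
  and disj: "\<forall>f\<in>E. \<forall>f'\<in>E. f \<noteq> f' \<longrightarrow> Vs f \<inter> Vs f' \<subseteq> K"
  shows "card (\<Union>f\<in>E. Vs f) \<le> (r-2)*(1 + (\<Sum>f\<in>E. ord f)) + 2"
    and "card (\<Union>f\<in>E. Vs f) = (r-2)*(1 + (\<Sum>f\<in>E. ord f)) + 2
         \<Longrightarrow> \<forall>f\<in>E. Vs f \<inter> K = f \<and> card (Vs f) = (r-2)*ord f + 2"
proof -
  have KU: "K \<subseteq> (\<Union>f\<in>E. Vs f)"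
  proof
    fix x assume "x \<in> K"
    then obtain f where "f \<in> E" "x \<in> f" using KE by blast
    then show "x \<in> (\<Union>f\<in>E. Vs f)" using br by blast
  qed
  have eqU: "(\<Union>f\<in>E. Vs f) = K \<union> (\<Union>f\<in>E. Vs f - K)" using KU by auto
  have c1: "card (\<Union>f\<in>E. Vs f) = r + (\<Sum>f\<in>E. card (Vs f - K))"
  proof -
    have fin2: "finite (\<Union>f\<in>E. Vs f - K)" using fE br by simp
    have "K \<inter> (\<Union>f\<in>E. Vs f - K) = {}" by auto
    then have "card (K \<union> (\<Union>f\<in>E. Vs f - K)) = card K + card (\<Union>f\<in>E. Vs f - K)"
      by (rule card_Un_disjoint[OF K(1) fin2])
    moreover have "card (\<Union>f\<in>E. Vs f - K) = (\<Sum>f\<in>E. card (Vs f - K))"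
    proof (rule card_UN_disjoint)
      show "finite E" by (rule fE)
      show "\<forall>i\<in>E. finite (Vs i - K)" using br by blast
      show "\<forall>i\<in>E. \<forall>j\<in>E. i \<noteq> j \<longrightarrow> (Vs i - K) \<inter> (Vs j - K) = {}"
      proof (intro ballI impI)
        fix i j assume "i \<in> E" "j \<in> E" "i \<noteq> j"
        then have "Vs i \<inter> Vs j \<subseteq> K" using disj by blast
        then show "(Vs i - K) \<inter> (Vs j - K) = {}" by blast
      qed
    qed
    ultimately show ?thesis unfolding eqU K(2) by simp
  qed
  have t1: "card (Vs f - K) + card (Vs f \<inter> K) = card (Vs f)" if "f \<in> E" for f
  proof -
    have "finite (Vs f)" using br that by blast
    then show ?thesis using card_Int_Diff[of "Vs f" K] by simp
  qed
  have t2: "card (Vs f \<inter> K) \<ge> 2" if "f \<in> E" for f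
  proof -
    have "f \<subseteq> Vs f \<inter> K" using br that Ecard by blast
    moreover have "finite (Vs f \<inter> K)" using K(1) by simp
    ultimately have "card f \<le> card (Vs f \<inter> K)" by (rule card_mono[rotated])
    then show ?thesis using Ecard that by simp
  qed
  have le: "card (Vs f - K) \<le> (r-2)*ord f" if "f \<in> E" for f
  proof -
    have "card (Vs f) \<le> (r-2)*ord f + 2" using br that by blast
    then show ?thesis using t1[OF that] t2[OF that] by linarith
  qed
  have "(\<Sum>f\<in>E. card (Vs f - K)) \<le> (\<Sum>f\<in>E. (r-2)*ord f)" using le by (rule sum_mono)
  also have "\<dots> = (r-2) * (\<Sum>f\<in>E. ord f)" by (simp add: sum_distrib_left)
  finally have sle: "(\<Sum>f\<in>E. card (Vs f - K)) \<le> (r-2) * (\<Sum>f\<in>E. ord f)" .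
  have ar: "(r-2)*(1 + (\<Sum>f\<in>E. ord f)) + 2 = r + (r-2) * (\<Sum>f\<in>E. ord f)"
  proof -
    define p where "p = r - 2"
    have p: "r = p + 2" using K(3) unfolding p_def by simp
    show ?thesis unfolding p by (simp add: algebra_simps)
  qed
  show "card (\<Union>f\<in>E. Vs f) \<le> (r-2)*(1 + (\<Sum>f\<in>E. ord f)) + 2"
    using c1 sle ar by linarith
  assume "card (\<Union>f\<in>E. Vs f) = (r-2)*(1 + (\<Sum>f\<in>E. ord f)) + 2"
  then have "(\<Sum>f\<in>E. card (Vs f - K)) = (r-2) * (\<Sum>f\<in>E. ord f)"
    using c1 ar by linarith
  then have S: "(\<Sum>f\<in>E. card (Vs f - K)) = (\<Sum>f\<in>E. (r-2)*ord f)"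
    by (simp add: sum_distrib_left)
  have eq: "card (Vs f - K) = (r-2)*ord f" if "f \<in> E" for f
    using sum_mono_inv[of "\<lambda>f. card (Vs f - K)" E "\<lambda>f. (r-2)*ord f", OF S le that fE] by simp
  show "\<forall>f\<in>E. Vs f \<inter> K = f \<and> card (Vs f) = (r-2)*ord f + 2"
  proof
    fix f assume fe: "f \<in> E"
    have "card (Vs f) \<le> (r-2)*ord f + 2" using br fe by blast
    then have c2: "card (Vs f \<inter> K) = 2" using t1[OF fe] t2[OF fe] eq[OF fe] by linarith
    have "f \<subseteq> Vs f \<inter> K" using br fe Ecard by blast
    moreover have "finite (Vs f \<inter> K)" using K(1) by simp
    ultimately have "Vs f \<inter> K = f" using c2 Ecard fe
      by (metis card_subset_eq)
    then show "Vs f \<inter> K = f \<and> card (Vs f) = (r-2)*ord f + 2" using t1[OF fe] c2 eq[OF fe] by simp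
  qed
qed

lemma edges_facts:
  assumes "finite K" "card K = r" "3 \<le> r" "e \<subseteq> K" "card e = 2"
  shows "finite (edges_of K - {e})" "\<forall>f\<in>edges_of K - {e}. card f = 2 \<and> f \<subseteq> K"
    "K \<subseteq> \<Union>(edges_of K - {e})"
proof -
  show "finite (edges_of K - {e})" using finite_edges_of[OF assms(1)] by simp
  show "\<forall>f\<in>edges_of K - {e}. card f = 2 \<and> f \<subseteq> K" by (simp add: edges_of_iff)
  have "3 \<le> card K" using assms(2,3) by simp
  from K_sub_Union[OF assms(1) this assms(4,5)]
  show "K \<subseteq> \<Union>(edges_of K - {e})" by blast
qed

lemma twg_basic:
  assumes "twg r f T k" "3 \<le> r"
  shows "finite (fst T) \<and> f \<subseteq> fst T \<and> card f = 2 \<and> (\<forall>c\<in>snd T. c \<subseteq> fst T \<and> card c = 2)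
         \<and> card (fst T) \<le> (r-2)*k+2"
  using assms
proof (induction rule: twg.induct)
  case (base e)
  then have "finite e" by (intro card_ge_0_finite) simp
  then show ?case using base by simp
next
  case (step K e Tg ord)
  let ?E = "edges_of K - {e}"
  note ef = edges_facts[OF step(1,2) \<open>3 \<le> r\<close> step(3,4)]
  have IH: "finite (fst (Tg f)) \<and> f \<subseteq> fst (Tg f) \<and> card f = 2 \<and> (\<forall>c\<in>snd (Tg f). c \<subseteq> fst (Tg f) \<and> card c = 2)
         \<and> card (fst (Tg f)) \<le> (r-2)*ord f+2" if "f \<in> ?E" for f
    using bspec[OF step.IH that] \<open>3 \<le> r\<close> by simp
  have br: "\<forall>f\<in>?E. finite (fst (Tg f)) \<and> f \<subseteq> fst (Tg f) \<and> card (fst (Tg f)) \<le> (r-2)*ord f + 2"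
    using IH by simp
  have c: "card (\<Union>f\<in>?E. fst (Tg f)) \<le> (r-2)*(1 + (\<Sum>f\<in>?E. ord f)) + 2"
    by (rule step_card_gen(1)[OF step(1,2) \<open>3 \<le> r\<close> ef br step(5)])
  have fin: "finite (\<Union>f\<in>?E. fst (Tg f))" using ef(1) br by blast
  have "e \<subseteq> K" by fact
  also have "K \<subseteq> \<Union>?E" by (rule ef(3))
  also have "\<Union>?E \<subseteq> (\<Union>f\<in>?E. fst (Tg f))" using br by blast
  finally have sub: "e \<subseteq> (\<Union>f\<in>?E. fst (Tg f))" .
  have sn: "\<forall>c\<in>(\<Union>f\<in>?E. snd (Tg f)). c \<subseteq> (\<Union>f\<in>?E. fst (Tg f)) \<and> card c = 2"
  proof
    fix c assume "c \<in> (\<Union>f\<in>?E. snd (Tg f))"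
    then obtain f where "f \<in> ?E" "c \<in> snd (Tg f)" by blast
    then show "c \<subseteq> (\<Union>f\<in>?E. fst (Tg f)) \<and> card c = 2" using IH by blast
  qed
  show ?case using c fin sub sn step(4) by simp
qed

inductive gt :: "nat \<Rightarrow> 'a set \<Rightarrow> ('a set \<times> 'a set set) \<Rightarrow> nat \<Rightarrow> 'a set set \<Rightarrow> bool" for r where
  gbase: "card e = 2 \<Longrightarrow> gt r e (e, {e}) 0 {e}"
| gstep: "\<lbrakk> finite K; card K = r; e \<subseteq> K; card e = 2;
          \<forall>f \<in> edges_of K - {e}. gt r f (Tg f) (ord f) (Cf f);
          \<forall>f \<in> edges_of K - {e}. fst (Tg f) \<inter> K = f;
          \<forall>f \<in> edges_of K - {e}. \<forall>f' \<in> edges_of K - {e}. f \<noteq> f' \<longrightarrow>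
              fst (Tg f) \<inter> fst (Tg f') \<subseteq> K \<rbrakk>
        \<Longrightarrow> gt r e ((\<Union>f \<in> edges_of K - {e}. fst (Tg f)), (\<Union>f \<in> edges_of K - {e}. snd (Tg f)))
                 (1 + (\<Sum>f \<in> edges_of K - {e}. ord f)) (edges_of K \<union> (\<Union>f \<in> edges_of K - {e}. Cf f))"

lemma gt_basic:
  assumes "gt r f T k C" "3 \<le> r"
  shows "twg r f T k \<and> finite (fst T) \<and> f \<subseteq> fst T \<and> card f = 2 \<and> f \<in> C \<and> snd T \<subseteq> C
         \<and> (\<forall>c\<in>C. c \<subseteq> fst T \<and> card c = 2)"
  using assms
proof (induction rule: gt.induct)
  case (gbase e)
  then have "finite e" by (intro card_ge_0_finite) simp
  then show ?case using gbase by (simp add: twg.base)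
next
  case (gstep K e Tg ord Cf)
  let ?E = "edges_of K - {e}"
  note ef = edges_facts[OF gstep(1,2) \<open>3 \<le> r\<close> gstep(3,4)]
  have IH: "twg r f (Tg f) (ord f) \<and> finite (fst (Tg f)) \<and> f \<subseteq> fst (Tg f) \<and> card f = 2 \<and> f \<in> Cf f
     \<and> snd (Tg f) \<subseteq> Cf f \<and> (\<forall>c\<in>Cf f. c \<subseteq> fst (Tg f) \<and> card c = 2)" if "f \<in> ?E" for f
    using bspec[OF gstep.IH that] \<open>3 \<le> r\<close> by simp
  have tw: "twg r e ((\<Union>f \<in> ?E. fst (Tg f)), (\<Union>f \<in> ?E. snd (Tg f))) (1 + (\<Sum>f \<in> ?E. ord f))"
  proof (rule twg.step[OF gstep(1-4)])
    show "\<forall>f\<in>?E. twg r f (Tg f) (ord f)" using IH by simp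
    show "\<forall>f\<in>?E. \<forall>f'\<in>?E. f \<noteq> f' \<longrightarrow> fst (Tg f) \<inter> fst (Tg f') \<subseteq> K" by (rule gstep(6))
  qed
  have tb: "finite (\<Union>f \<in> ?E. fst (Tg f)) \<and> e \<subseteq> (\<Union>f \<in> ?E. fst (Tg f))"
    using twg_basic[OF tw \<open>3 \<le> r\<close>] by simp
  have eC: "e \<in> edges_of K" using gstep(3,4) by (simp add: edges_of_iff)
  have sC: "(\<Union>f \<in> ?E. snd (Tg f)) \<subseteq> edges_of K \<union> (\<Union>f \<in> ?E. Cf f)"
  proof
    fix c assume "c \<in> (\<Union>f \<in> ?E. snd (Tg f))"
    then obtain f where "f \<in> ?E" "c \<in> snd (Tg f)" by blast
    then show "c \<in> edges_of K \<union> (\<Union>f \<in> ?E. Cf f)" using IH by blast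
  qed
  have KU: "K \<subseteq> (\<Union>f \<in> ?E. fst (Tg f))"
  proof
    fix x assume "x \<in> K"
    then obtain f where "f \<in> ?E" "x \<in> f" using ef(3) by blast
    then show "x \<in> (\<Union>f \<in> ?E. fst (Tg f))" using IH by blast
  qed
  have cC: "\<forall>c\<in>edges_of K \<union> (\<Union>f \<in> ?E. Cf f). c \<subseteq> (\<Union>f \<in> ?E. fst (Tg f)) \<and> card c = 2"
  proof
    fix c assume c: "c \<in> edges_of K \<union> (\<Union>f \<in> ?E. Cf f)"
    show "c \<subseteq> (\<Union>f \<in> ?E. fst (Tg f)) \<and> card c = 2"
    proof (cases "c \<in> edges_of K")
      case True
      then show ?thesis using KU by (auto simp: edges_of_iff)
    next
      case False
      then obtain f where f: "f \<in> ?E" "c \<in> Cf f" using c by blast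
      then have "c \<subseteq> fst (Tg f) \<and> card c = 2" using IH by blast
      then show ?thesis using f by blast
    qed
  qed
  show ?case using tw tb eC sC cC gstep(4) by simp
qed

lemma twg_gt:
  assumes "twg r f T k" "3 \<le> r" "card (fst T) = (r-2)*k+2"
  shows "\<exists>C. gt r f T k C"
  using assms
proof (induction rule: twg.induct)
  case (base e)
  then show ?case using gt.gbase by blast
next
  case (step K e Tg ord)
  let ?E = "edges_of K - {e}"
  note ef = edges_facts[OF step(1,2) \<open>3 \<le> r\<close> step(3,4)]
  have br: "\<forall>f\<in>?E. finite (fst (Tg f)) \<and> f \<subseteq> fst (Tg f) \<and> card (fst (Tg f)) \<le> (r-2)*ord f + 2"
  proof
    fix f assume "f \<in> ?E"
    then have "twg r f (Tg f) (ord f)" using bspec[OF step.IH] by blast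
    from twg_basic[OF this \<open>3 \<le> r\<close>]
    show "finite (fst (Tg f)) \<and> f \<subseteq> fst (Tg f) \<and> card (fst (Tg f)) \<le> (r-2)*ord f + 2" by simp
  qed
  have eq: "\<forall>f\<in>?E. fst (Tg f) \<inter> K = f \<and> card (fst (Tg f)) = (r-2)*ord f + 2"
    by (rule step_card_gen(2)[OF step(1,2) \<open>3 \<le> r\<close> ef br step(5)]) (use step.prems(2) in simp)
  have ex: "\<forall>f\<in>?E. \<exists>C. gt r f (Tg f) (ord f) C"
  proof
    fix f assume f: "f \<in> ?E"
    then have "card (fst (Tg f)) = (r-2)*ord f + 2" using eq by blast
    then show "\<exists>C. gt r f (Tg f) (ord f) C" using bspec[OF step.IH f] \<open>3 \<le> r\<close> by blast
  qed
  from bchoice[OF ex] obtain Cf where Cf: "\<forall>f\<in>?E. gt r f (Tg f) (ord f) (Cf f)" ..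
  have eq2: "\<forall>f\<in>?E. fst (Tg f) \<inter> K = f" using eq by simp
  have "gt r e ((\<Union>f \<in> ?E. fst (Tg f)), (\<Union>f \<in> ?E. snd (Tg f)))
                 (1 + (\<Sum>f \<in> ?E. ord f)) (edges_of K \<union> (\<Union>f \<in> ?E. Cf f))"
    by (rule gt.gstep[OF step(1-4) Cf eq2 step(5)])
  then show ?case by blast
qed

lemma choose2_ge: assumes "5 \<le> r" shows "10 \<le> r choose 2"
proof -
  have "5 * 4 \<le> r * (r - 1)" using assms by (intro mult_le_mono) auto
  then show ?thesis unfolding choose_two by simp
qed

lemma pair_in_edges: "x \<in> X \<Longrightarrow> y \<in> X \<Longrightarrow> x \<noteq> y \<Longrightarrow> {x,y} \<in> edges_of X"
  by (simp add: edges_of_iff)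

lemma edges_sub_eq: "c \<subseteq> h \<Longrightarrow> card c = 2 \<Longrightarrow> card h = 2 \<Longrightarrow> c = h"
proof -
  assume a: "c \<subseteq> h" "card c = 2" "card h = 2"
  then have "finite h" by (intro card_ge_0_finite) simp
  then show ?thesis using a card_subset_eq by metis
qed

lemma gt_closed:
  assumes "gt r f T k C" "5 \<le> r"
  shows "\<forall>X g. finite X \<longrightarrow> card X = r \<longrightarrow> g \<in> edges_of X \<longrightarrow> edges_of X - {g} \<subseteq> C \<longrightarrow> g \<in> C"
  using assms
proof (induction rule: gt.induct)
  case (gbase e)
  show ?case
  proof (intro allI impI)
    fix X g assume X: "finite X" "card X = r" "g \<in> edges_of X" "edges_of X - {g} \<subseteq> {e}"
    have "10 \<le> card (edges_of X)" using card_edges_of[OF X(1)] X(2) choose2_ge[OF gbase(2)] by simp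
    moreover have "card (edges_of X) - card {g} \<le> card (edges_of X - {g})"
      by (rule diff_card_le_card_Diff) simp
    moreover have "card (edges_of X - {g}) \<le> card {e}" using X(4) by (intro card_mono) auto
    ultimately show "g \<in> {e}" by simp
  qed
next
  case (gstep K e Tg ord Cf)
  let ?E = "edges_of K - {e}"
  let ?C = "edges_of K \<union> (\<Union>f \<in> ?E. Cf f)"
  have r3: "3 \<le> r" using gstep.prems by simp
  have IH: "finite (fst (Tg f)) \<and> f \<subseteq> fst (Tg f) \<and> card f = 2 \<and> f \<in> Cf f
     \<and> (\<forall>c\<in>Cf f. c \<subseteq> fst (Tg f) \<and> card c = 2)" if "f \<in> ?E" for f
  proof -
    have "gt r f (Tg f) (ord f) (Cf f)" using bspec[OF gstep.IH that] by simp
    from gt_basic[OF this r3] show ?thesis by simp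
  qed
  have IHc: "\<forall>X g. finite X \<longrightarrow> card X = r \<longrightarrow> g \<in> edges_of X \<longrightarrow> edges_of X - {g} \<subseteq> Cf f \<longrightarrow> g \<in> Cf f"
    if "f \<in> ?E" for f
    using bspec[OF gstep.IH that] gstep.prems by simp
  have inter: "fst (Tg f) \<inter> K = f" if "f \<in> ?E" for f using gstep(5) that by blast
  have disj: "fst (Tg f) \<inter> fst (Tg f') \<subseteq> K" if "f \<in> ?E" "f' \<in> ?E" "f \<noteq> f'" for f f'
    using gstep(6) that by blast
  have loc: "y \<in> fst (Tg h)" if h: "h \<in> ?E" and x: "x \<in> fst (Tg h)" "x \<notin> K" and c: "{x,y} \<in> ?C" for h x y
  proof -
    have "{x,y} \<notin> edges_of K" using x by (auto simp: edges_of_iff)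
    then obtain h' where h': "h' \<in> ?E" "{x,y} \<in> Cf h'" using c by blast
    then have xy: "{x,y} \<subseteq> fst (Tg h')" using IH[OF h'(1)] by blast
    show ?thesis
    proof (cases "h' = h")
      case True
      then show ?thesis using xy by simp
    next
      case False
      then have "x \<in> K" using disj[OF h h'(1)] x xy by blast
      then show ?thesis using x by simp
    qed
  qed
  show ?case
  proof (intro allI impI)
    fix X g assume X: "finite X" "card X = r" "g \<in> edges_of X" "edges_of X - {g} \<subseteq> ?C"
    have gX: "g \<subseteq> X" "card g = 2" using X(3) by (auto simp: edges_of_iff)
    have inC: "{a,b} \<in> ?C" if "a \<in> X" "b \<in> X" "a \<noteq> b" "{a,b} \<noteq> g" for a b
      using X(4) pair_in_edges[OF that(1-3)] that(4) by blast
    show "g \<in> ?C"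
    proof (cases "X \<subseteq> K")
      case True
      then show ?thesis using gX by (auto simp: edges_of_iff)
    next
      case False
      then obtain x where x: "x \<in> X" "x \<notin> K" by blast
      have fg: "finite (g \<union> {x})" using gX(2) by (intro finite_UnI card_ge_0_finite) auto
      have "card X - card (g \<union> {x}) \<le> card (X - (g \<union> {x}))" by (rule diff_card_le_card_Diff[OF fg])
      moreover have "card (g \<union> {x}) \<le> 3" using card_Un_le[of g "{x}"] gX(2) by simp
      ultimately have "card (X - (g \<union> {x})) > 0" using X(2) gstep.prems by linarith
      then obtain y0 where y0: "y0 \<in> X" "y0 \<notin> g" "y0 \<noteq> x" by (metis card_gt_0_iff ex_in_conv DiffE UnI1 UnI2 singletonI)
      have "{x,y0} \<in> ?C" using inC[OF x(1) y0(1)] y0 by auto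
      moreover have "{x,y0} \<notin> edges_of K" using x by (auto simp: edges_of_iff)
      ultimately obtain h where h: "h \<in> ?E" "{x,y0} \<in> Cf h" by blast
      then have xh: "x \<in> fst (Tg h)" using IH[OF h(1)] by blast
      show ?thesis
      proof (cases "X \<subseteq> fst (Tg h)")
        case True
        have "edges_of X - {g} \<subseteq> Cf h"
        proof
          fix c assume c: "c \<in> edges_of X - {g}"
          then have cX: "c \<subseteq> X" "card c = 2" by (auto simp: edges_of_iff)
          then have cV: "c \<subseteq> fst (Tg h)" using True by blast
          have hh: "h \<in> Cf h" "card h = 2" using IH[OF h(1)] by auto
          have cC: "c \<in> ?C" using c X(4) by blast
          show "c \<in> Cf h"
          proof (cases "c \<in> edges_of K")
            case True
            then have "c \<subseteq> h" using cV inter[OF h(1)] by (auto simp: edges_of_iff)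
            then show ?thesis using edges_sub_eq cX(2) hh by metis
          next
            case False
            then obtain h' where h': "h' \<in> ?E" "c \<in> Cf h'" using cC by blast
            show ?thesis
            proof (cases "h' = h")
              case True then show ?thesis using h' by simp
            next
              case False
              have "c \<subseteq> fst (Tg h')" using IH[OF h'(1)] h'(2) by blast
              then have "c \<subseteq> K" using disj[OF h(1) h'(1)] False cV by blast
              then have "c \<subseteq> h" using cV inter[OF h(1)] by blast
              then show ?thesis using edges_sub_eq cX(2) hh by metis
            qed
          qed
        qed
        then have "g \<in> Cf h" using IHc[OF h(1)] X(1,2,3) by blast
        then show ?thesis using h(1) by blast
      next
        case False
        then obtain y where y: "y \<in> X" "y \<notin> fst (Tg h)" by blast
        have xy: "x \<noteq> y" using xh y by auto
        have "{x,y} \<notin> ?C" using loc[OF h(1) xh x(2)] y(2) by blast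
        then have gxy: "g = {x,y}" using inC[OF x(1) y(1) xy] by blast
        have "X \<subseteq> {x,y} \<union> h"
        proof
          fix z assume z: "z \<in> X"
          show "z \<in> {x,y} \<union> h"
          proof (cases "z = x \<or> z = y")
            case True then show ?thesis by blast
          next
            case False
            have "{x,z} \<noteq> g" using False gxy by (auto simp: doubleton_eq_iff)
            then have "{x,z} \<in> ?C" using inC[OF x(1) z] False by blast
            then have zh: "z \<in> fst (Tg h)" using loc[OF h(1) xh x(2)] by blast
            have "z \<in> K"
            proof (rule ccontr)
              assume zK: "z \<notin> K"
              have "{z,y} \<noteq> g" using False gxy by (auto simp: doubleton_eq_iff)
              then have "{z,y} \<in> ?C" using inC[OF z y(1)] False by blast
              then have "y \<in> fst (Tg h)" using loc[OF h(1) zh zK] by blast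
              then show False using y(2) by simp
            qed
            then show ?thesis using zh inter[OF h(1)] by blast
          qed
        qed
        then have "card X \<le> card ({x,y} \<union> h)" 
          using IH[OF h(1)] finite_subset[of h "fst (Tg h)"] by (intro card_mono) auto
        also have "\<dots> \<le> card {x,y} + card h" by (rule card_Un_le)
        also have "\<dots> \<le> 4" using IH[OF h(1)] xy by simp
        finally show ?thesis using X(2) gstep.prems by simp
      qed
    qed
  qed
qed

lemma gt_sub:
  assumes "gt r p T k C" "3 \<le> r"
    and cl: "\<forall>X g. finite X \<longrightarrow> card X = r \<longrightarrow> g \<in> edges_of X \<longrightarrow> edges_of X - {g} \<subseteq> D \<longrightarrow> g \<in> D"
  shows "snd T \<subseteq> D \<longrightarrow> C \<subseteq> D"
  using assms
proof (induction rule: gt.induct)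
  case (gbase e)
  then show ?case by simp
next
  case (gstep K e Tg ord Cf)
  let ?E = "edges_of K - {e}"
  have r3: "3 \<le> r" using gstep.prems by simp
  have clD: "\<forall>X g. finite X \<longrightarrow> card X = r \<longrightarrow> g \<in> edges_of X \<longrightarrow> edges_of X - {g} \<subseteq> D \<longrightarrow> g \<in> D"
    using gstep.prems by simp
  show ?case
  proof
    assume sD: "snd ((\<Union>f \<in> ?E. fst (Tg f)), (\<Union>f \<in> ?E. snd (Tg f))) \<subseteq> D"
    have CfD: "Cf f \<subseteq> D" if f: "f \<in> ?E" for f
    proof -
      have "snd (Tg f) \<subseteq> D" using sD f by auto
      then show ?thesis using bspec[OF gstep.IH f] r3 clD by simp
    qed
    have ED: "f \<in> D" if f: "f \<in> ?E" for f
    proof -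
      have "gt r f (Tg f) (ord f) (Cf f)" using bspec[OF gstep.IH f] by simp
      then have "f \<in> Cf f" using gt_basic r3 by blast
      then show ?thesis using CfD[OF f] by blast
    qed
    have "e \<in> edges_of K" using gstep(3,4) by (simp add: edges_of_iff)
    moreover have "edges_of K - {e} \<subseteq> D" using ED by blast
    ultimately have "e \<in> D" using clD gstep(1,2) by blast
    then have "edges_of K \<subseteq> D" using ED by blast
    then show "edges_of K \<union> (\<Union>f \<in> ?E. Cf f) \<subseteq> D" using CfD by blast
  qed
qed

lemma gt_local:
  assumes "gt r p T' k' C'" "3 \<le> r"
    and loc: "\<forall>h\<in>E. \<forall>x\<in>Vs h - K. \<forall>y. {x,y} \<in> D \<longrightarrow> y \<in> Vs h"
    and inter: "\<forall>h\<in>E. Vs h \<inter> K = h"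
    and disj: "\<forall>h\<in>E. \<forall>h'\<in>E. h \<noteq> h' \<longrightarrow> Vs h \<inter> Vs h' \<subseteq> K"
    and gE: "g \<in> E" and Ec: "\<forall>h\<in>E. card h = 2"
  shows "C' \<subseteq> D \<longrightarrow> p \<subseteq> Vs g \<longrightarrow> fst T' \<inter> K \<subseteq> g \<longrightarrow> fst T' \<subseteq> K \<union> (\<Union>h\<in>E. Vs h) \<longrightarrow> fst T' \<subseteq> Vs g"
  using assms(1)
proof (induction rule: gt.induct)
  case (gbase e)
  then show ?case by simp
next
  case (gstep K' e Tg ord Cf)
  let ?E = "edges_of K' - {e}"
  note r3 = assms(2)
  note loc' = assms(3)
  note inter' = assms(4)
  note disj' = assms(5)
  have gE': "g \<in> E" "card g = 2" using assms(6,7) by auto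
  note ef = edges_facts[OF gstep(1,2) r3 gstep(3,4)]
  have IHb: "gt r f (Tg f) (ord f) (Cf f)" if "f \<in> ?E" for f using bspec[OF gstep.IH that] by simp
  have IH: "Cf f \<subseteq> D \<longrightarrow> f \<subseteq> Vs g \<longrightarrow> fst (Tg f) \<inter> K \<subseteq> g \<longrightarrow> fst (Tg f) \<subseteq> K \<union> (\<Union>h\<in>E. Vs h) \<longrightarrow> fst (Tg f) \<subseteq> Vs g"
    if "f \<in> ?E" for f using bspec[OF gstep.IH that] by simp
  show ?case
  proof (intro impI)
    let ?V = "\<Union>f \<in> ?E. fst (Tg f)"
    assume CD: "edges_of K' \<union> (\<Union>f \<in> ?E. Cf f) \<subseteq> D"
      and pV: "e \<subseteq> Vs g" and iK: "fst (?V, \<Union>f \<in> ?E. snd (Tg f)) \<inter> K \<subseteq> g"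
      and cov: "fst (?V, \<Union>f \<in> ?E. snd (Tg f)) \<subseteq> K \<union> (\<Union>h\<in>E. Vs h)"
    have K'V: "K' \<subseteq> ?V"
    proof
      fix x assume "x \<in> K'"
      then obtain f where f: "f \<in> ?E" "x \<in> f" using ef(3) by blast
      have "f \<subseteq> fst (Tg f)" using gt_basic[OF IHb[OF f(1)] r3] by simp
      then show "x \<in> ?V" using f by blast
    qed
    have fing: "finite g" using gE'(2) by (intro card_ge_0_finite) simp
    obtain x where x: "x \<in> K'" "x \<notin> K"
    proof (rule ccontr)
      assume "\<not> thesis"
      then have "K' \<subseteq> K" using that by blast
      then have "K' \<subseteq> g" using K'V iK by auto
      then have "card K' \<le> card g" using fing by (rule card_mono[rotated])
      then show False using gstep(2) gE'(2) r3 by simp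
    qed
    have "x \<in> ?V" using K'V x(1) by blast
    then have "x \<in> K \<union> (\<Union>h\<in>E. Vs h)" using cov unfolding fst_conv by (rule subsetD[rotated])
    then obtain h where h: "h \<in> E" "x \<in> Vs h" using x(2) by blast
    have K'h: "K' \<subseteq> Vs h"
    proof
      fix y assume y: "y \<in> K'"
      show "y \<in> Vs h"
      proof (cases "y = x")
        case True then show ?thesis using h by simp
      next
        case False
        then have "{x,y} \<in> edges_of K'" using x(1) y by (intro pair_in_edges) auto
        then have "{x,y} \<in> D" using CD by blast
        moreover have "\<forall>x\<in>Vs h - K. \<forall>y. {x,y} \<in> D \<longrightarrow> y \<in> Vs h" using loc' h(1) by (rule bspec)
        moreover have "x \<in> Vs h - K" using h(2) x(2) by simp
        ultimately show ?thesis by blast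
      qed
    qed
    have hg: "h = g"
    proof (rule ccontr)
      assume hg: "h \<noteq> g"
      have "e \<subseteq> Vs h" using K'h gstep(3) by blast
      moreover have "Vs h \<inter> Vs g \<subseteq> K" using disj' h(1) gE'(1) hg by blast
      ultimately have "e \<subseteq> K" using pV by blast
      moreover have "e \<subseteq> ?V" using gstep(3) K'V by blast
      ultimately have "e \<subseteq> g" using iK by auto
      then have "e = g" using gstep(4) gE'(2) by (rule edges_sub_eq)
      then have "g \<subseteq> Vs h \<inter> K" using \<open>e \<subseteq> Vs h\<close> \<open>e \<subseteq> K\<close> by blast
      then have "g \<subseteq> h" using inter' h(1) by blast
      moreover have "card h = 2" using assms(7) h(1) by blast
      ultimately have "g = h" using gE'(2) by (intro edges_sub_eq)
      then show False using hg by simp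
    qed
    show "fst (?V, \<Union>f \<in> ?E. snd (Tg f)) \<subseteq> Vs g"
    proof -
      have "fst (Tg f) \<subseteq> Vs g" if f: "f \<in> ?E" for f
      proof -
        have a1: "Cf f \<subseteq> D" using CD f by blast
        have a2: "f \<subseteq> Vs g" using K'h hg f by (auto simp: edges_of_iff)
        have a3: "fst (Tg f) \<inter> K \<subseteq> g" using iK f by auto
        have a4: "fst (Tg f) \<subseteq> K \<union> (\<Union>h\<in>E. Vs h)" using cov f by auto
        show ?thesis using IH[OF f] a1 a2 a3 a4 by simp
      qed
      then show ?thesis by auto
    qed
  qed
qed

definition Fam :: "nat \<Rightarrow> nat \<Rightarrow> nat \<Rightarrow> 'a set set \<Rightarrow> 'a set \<Rightarrow> ('a set \<Rightarrow> 'a set \<times> 'a set set) set" where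
  "Fam r q s E U = {F. (\<forall>x. x \<notin> E \<longrightarrow> F x = undefined) \<and>
     (\<forall>h\<in>E. twg r h (F h) q \<and> fst (F h) - h \<subseteq> U \<and> card (fst (F h) - h) = s) \<and>
     (\<forall>h\<in>E. \<forall>h'\<in>E. h \<noteq> h' \<longrightarrow> (fst (F h) - h) \<inter> (fst (F h') - h') = {})}"

definition Phi :: "'a set set \<Rightarrow> ('a set \<Rightarrow> 'a set \<times> 'a set set) \<Rightarrow> 'a set \<times> 'a set set" where
  "Phi E F = ((\<Union>h\<in>E. fst (F h)), (\<Union>h\<in>E. snd (F h)))"

definition Str :: "nat \<Rightarrow> nat \<Rightarrow> 'a set \<Rightarrow> 'a set \<Rightarrow> ('a set \<times> ('a set \<Rightarrow> 'a set \<times> 'a set set)) set" where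
  "Str r q e V = Sigma {K. K \<subseteq> V \<and> e \<subseteq> K \<and> card K = r} (\<lambda>K. Fam r q ((r-2)*q) (edges_of K - {e}) (V - K))"

lemma loc_gen:
  assumes "\<forall>h\<in>E. \<forall>c\<in>Cf h. c \<subseteq> Vs h" "\<forall>h\<in>E. \<forall>h'\<in>E. h \<noteq> h' \<longrightarrow> Vs h \<inter> Vs h' \<subseteq> K"
    "h \<in> E" "x \<in> Vs h" "x \<notin> K" "{x,y} \<in> edges_of K \<union> (\<Union>h\<in>E. Cf h)"
  shows "y \<in> Vs h"
proof -
  have "{x,y} \<notin> edges_of K" using assms(5) by (auto simp: edges_of_iff)
  then obtain h' where h': "h' \<in> E" "{x,y} \<in> Cf h'" using assms(6) by blast
  then have xy: "{x,y} \<subseteq> Vs h'" using assms(1) by blast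
  show ?thesis
  proof (cases "h' = h")
    case True
    then show ?thesis using xy by simp
  next
    case False
    then have "Vs h \<inter> Vs h' \<subseteq> K" using assms(2,3) h'(1) by blast
    then have "x \<in> K" using assms(4) xy by blast
    then show ?thesis using assms(5) by simp
  qed
qed

context
  fixes r q k :: nat and e V :: "'a set"
  assumes r5: "5 \<le> r" and kq: "k = 1 + ((r choose 2) - 1) * q"
    and e2: "card e = 2" and eV: "e \<subseteq> V" and finV: "finite V" and cardV: "card V = (r-2)*k+2"
begin

lemma r3: "3 \<le> r" using r5 by simp

lemma card_E: assumes "finite K" "card K = r" "e \<subseteq> K" shows "card (edges_of K - {e}) = (r choose 2) - 1"
proof -
  have "e \<in> edges_of K" using assms(3) e2 by (simp add: edges_of_iff)
  then show ?thesis using card_edges_of[OF assms(1)] assms(1,2) finite_edges_of by (simp add: card_Diff_singleton)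
qed

lemma str_facts:
  assumes KF: "(K,F) \<in> Str r q e V"
  shows "finite K" "card K = r" "e \<subseteq> K" "K \<subseteq> V"
    "\<forall>h\<in>edges_of K - {e}. twg r h (F h) q \<and> h \<subseteq> fst (F h) \<and> fst (F h) \<inter> K = h
        \<and> card (fst (F h)) = (r-2)*q+2 \<and> fst (F h) \<subseteq> V"
    "\<forall>h\<in>edges_of K - {e}. \<forall>h'\<in>edges_of K - {e}. h \<noteq> h' \<longrightarrow> fst (F h) \<inter> fst (F h') \<subseteq> K"
    "\<forall>x. x \<notin> edges_of K - {e} \<longrightarrow> F x = undefined"
proof -
  have K: "K \<subseteq> V" "e \<subseteq> K" "card K = r" and F: "F \<in> Fam r q ((r-2)*q) (edges_of K - {e}) (V - K)"
    using KF unfolding Str_def by auto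
  show "finite K" using K(1) finV by (rule finite_subset)
  show "card K = r" "e \<subseteq> K" "K \<subseteq> V" using K by auto
  show "\<forall>x. x \<notin> edges_of K - {e} \<longrightarrow> F x = undefined" using F unfolding Fam_def by simp
  show "\<forall>h\<in>edges_of K - {e}. twg r h (F h) q \<and> h \<subseteq> fst (F h) \<and> fst (F h) \<inter> K = h
        \<and> card (fst (F h)) = (r-2)*q+2 \<and> fst (F h) \<subseteq> V"
  proof
    fix h assume h: "h \<in> edges_of K - {e}"
    have hK: "h \<subseteq> K" "card h = 2" using h by (auto simp: edges_of_iff)
    have a: "twg r h (F h) q" "fst (F h) - h \<subseteq> V - K" "card (fst (F h) - h) = (r-2)*q"
      using F h unfolding Fam_def by auto
    have b: "finite (fst (F h))" "h \<subseteq> fst (F h)" using twg_basic[OF a(1) r3] by auto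
    have "fst (F h) \<inter> K = h" using a(2) b(2) hK(1) by blast
    moreover have "card (fst (F h)) = (r-2)*q+2"
    proof -
      have "card (fst (F h) - h) = card (fst (F h)) - card h" using b by (simp add: card_Diff_subset finite_subset)
      moreover have "card h \<le> card (fst (F h))" using b by (intro card_mono) auto
      ultimately show ?thesis using a(3) hK(2) by simp
    qed
    moreover have "fst (F h) \<subseteq> V" using a(2) b(2) hK(1) K(1) by blast
    ultimately show "twg r h (F h) q \<and> h \<subseteq> fst (F h) \<and> fst (F h) \<inter> K = h
        \<and> card (fst (F h)) = (r-2)*q+2 \<and> fst (F h) \<subseteq> V" using a(1) b(2) by simp
  qed
  show "\<forall>h\<in>edges_of K - {e}. \<forall>h'\<in>edges_of K - {e}. h \<noteq> h' \<longrightarrow> fst (F h) \<inter> fst (F h') \<subseteq> K"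
  proof (intro ballI impI)
    fix h h' assume hh: "h \<in> edges_of K - {e}" "h' \<in> edges_of K - {e}" "h \<noteq> h'"
    then have "(fst (F h) - h) \<inter> (fst (F h') - h') = {}" using F unfolding Fam_def by blast
    moreover have "h \<subseteq> K" "h' \<subseteq> K" using hh by (auto simp: edges_of_iff)
    ultimately show "fst (F h) \<inter> fst (F h') \<subseteq> K" by blast
  qed
qed


lemma str_supp:
  assumes KF: "(K,F) \<in> Str r q e V"
  shows "\<forall>h\<in>edges_of K - {e}. fst (F h) - h \<subseteq> V - K \<and> card (fst (F h) - h) = (r-2)*q"
    "\<forall>h\<in>edges_of K - {e}. \<forall>h'\<in>edges_of K - {e}. h \<noteq> h' \<longrightarrow> (fst (F h) - h) \<inter> (fst (F h') - h') = {}"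
  using KF unfolding Str_def Fam_def by auto

lemma arith_k: "(r-2)*k + 2 = r + ((r choose 2) - 1) * ((r-2)*q)"
proof -
  define p where "p = r - 2"
  have rp: "r = p + 2" using r5 unfolding p_def by simp
  show ?thesis unfolding kq unfolding rp by (simp add: algebra_simps)
qed

lemma str_V:
  assumes KF: "(K,F) \<in> Str r q e V"
  shows "fst (Phi (edges_of K - {e}) F) = V"
proof -
  let ?E = "edges_of K - {e}"
  note sf = str_facts[OF KF]
  note sp = str_supp[OF KF]
  have fK: "finite K" by (rule sf(1))
  note ef = edges_facts[OF sf(1,2) r3 sf(3) e2]
  have eq: "(\<Union>h\<in>?E. fst (F h)) = K \<union> (\<Union>h\<in>?E. fst (F h) - h)"
  proof
    show "(\<Union>h\<in>?E. fst (F h)) \<subseteq> K \<union> (\<Union>h\<in>?E. fst (F h) - h)"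
    proof
      fix x assume "x \<in> (\<Union>h\<in>?E. fst (F h))"
      then obtain h where h: "h \<in> ?E" "x \<in> fst (F h)" by blast
      have "h \<subseteq> K" using h(1) by (auto simp: edges_of_iff)
      then show "x \<in> K \<union> (\<Union>h\<in>?E. fst (F h) - h)" using h by blast
    qed
    show "K \<union> (\<Union>h\<in>?E. fst (F h) - h) \<subseteq> (\<Union>h\<in>?E. fst (F h))"
    proof
      fix x assume x: "x \<in> K \<union> (\<Union>h\<in>?E. fst (F h) - h)"
      show "x \<in> (\<Union>h\<in>?E. fst (F h))"
      proof (cases "x \<in> K")
        case True
        then obtain h where h: "h \<in> ?E" "x \<in> h" using ef(3) by blast
        then have "h \<subseteq> fst (F h)" using sf(5) by blast
        then show ?thesis using h by blast
      next
        case False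
        then show ?thesis using x by blast
      qed
    qed
  qed
  have fin2: "finite (\<Union>h\<in>?E. fst (F h) - h)"
  proof -
    have "(\<Union>h\<in>?E. fst (F h) - h) \<subseteq> V" using sp(1) by blast
    then show ?thesis using finV by (rule finite_subset)
  qed
  have d1: "K \<inter> (\<Union>h\<in>?E. fst (F h) - h) = {}" using sp(1) by blast
  have c1: "card (K \<union> (\<Union>h\<in>?E. fst (F h) - h)) = card K + card (\<Union>h\<in>?E. fst (F h) - h)"
    by (rule card_Un_disjoint[OF fK fin2 d1])
  have c2: "card (\<Union>h\<in>?E. fst (F h) - h) = (\<Sum>h\<in>?E. card (fst (F h) - h))"
  proof (rule card_UN_disjoint)
    show "finite ?E" by (rule ef(1))
    show "\<forall>i\<in>?E. finite (fst (F i) - i)"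
    proof
      fix i assume "i \<in> ?E"
      then have "fst (F i) - i \<subseteq> V" using sp(1) by blast
      then show "finite (fst (F i) - i)" using finV by (rule finite_subset)
    qed
    show "\<forall>i\<in>?E. \<forall>j\<in>?E. i \<noteq> j \<longrightarrow> (fst (F i) - i) \<inter> (fst (F j) - j) = {}" by (rule sp(2))
  qed
  have c3: "(\<Sum>h\<in>?E. card (fst (F h) - h)) = ((r choose 2) - 1) * ((r-2)*q)"
  proof -
    have "(\<Sum>h\<in>?E. card (fst (F h) - h)) = (\<Sum>h\<in>?E. (r-2)*q)" using sp(1) by (intro sum.cong) auto
    also have "\<dots> = card ?E * ((r-2)*q)" by simp
    finally show ?thesis using card_E[OF sf(1,2,3)] sf(2) by simp
  qed
  have cc: "card (\<Union>h\<in>?E. fst (F h)) = card V"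
    unfolding eq c1 c2 c3 cardV arith_k sf(2) ..
  have sub: "(\<Union>h\<in>?E. fst (F h)) \<subseteq> V" using sf(5) by blast
  have "(\<Union>h\<in>?E. fst (F h)) = V" using card_subset_eq[OF finV sub cc] .
  then show ?thesis unfolding Phi_def by simp
qed

lemma str_gt:
  assumes KF: "(K,F) \<in> Str r q e V"
  shows "\<exists>Cf. (\<forall>h\<in>edges_of K - {e}. gt r h (F h) q (Cf h)) \<and>
     gt r e (Phi (edges_of K - {e}) F) k (edges_of K \<union> (\<Union>h\<in>edges_of K - {e}. Cf h))"
proof -
  let ?E = "edges_of K - {e}"
  note sf = str_facts[OF KF]
  have ex: "\<forall>h\<in>?E. \<exists>C. gt r h (F h) q C"
  proof
    fix h assume h: "h \<in> ?E"
    then have "twg r h (F h) q" "card (fst (F h)) = (r-2)*q+2" using sf(5) by auto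
    then show "\<exists>C. gt r h (F h) q C" using twg_gt r3 by blast
  qed
  from bchoice[OF ex] obtain Cf where Cf: "\<forall>h\<in>?E. gt r h (F h) q (Cf h)" ..
  have i: "\<forall>h\<in>?E. fst (F h) \<inter> K = h" using sf(5) by simp
  have g: "gt r e ((\<Union>f \<in> ?E. fst (F f)), (\<Union>f \<in> ?E. snd (F f)))
                 (1 + (\<Sum>f \<in> ?E. q)) (edges_of K \<union> (\<Union>f \<in> ?E. Cf f))"
    by (rule gt.gstep[OF sf(1,2,3) e2 Cf i sf(6)])
  have "1 + (\<Sum>f \<in> ?E. q) = k" using card_E[OF sf(1,2,3)] sf(2) kq by simp
  then show ?thesis using g Cf unfolding Phi_def by auto
qed

lemma str_btwg:
  assumes KF: "(K,F) \<in> Str r q e V"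
  shows "btwg r e (Phi (edges_of K - {e}) F) k"
proof -
  let ?E = "edges_of K - {e}"
  note sf = str_facts[OF KF]
  have "1 + (\<Sum>f \<in> ?E. q) = k" using card_E[OF sf(1,2,3)] sf(2) kq by simp
  moreover have "\<forall>f\<in>?E. twg r f (F f) q" using sf(5) by simp
  ultimately show ?thesis unfolding btwg_def Phi_def using sf(1,2,3) e2 sf(6) by blast
qed

lemma snd_recover:
  assumes KF: "(K,F) \<in> Str r q e V" and g: "g \<in> edges_of K - {e}"
  shows "snd (F g) = {c \<in> snd (Phi (edges_of K - {e}) F). c \<subseteq> fst (F g)}"
proof
  let ?E = "edges_of K - {e}"
  note sf = str_facts[OF KF]
  have tb: "\<forall>c\<in>snd (F h). c \<subseteq> fst (F h) \<and> card c = 2" if "h \<in> ?E" for h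
  proof -
    have "twg r h (F h) q" using sf(5) that by blast
    then show ?thesis using twg_basic[OF _ r3] by blast
  qed
  show "snd (F g) \<subseteq> {c \<in> snd (Phi ?E F). c \<subseteq> fst (F g)}"
    using tb[OF g] g unfolding Phi_def by auto
  show "{c \<in> snd (Phi ?E F). c \<subseteq> fst (F g)} \<subseteq> snd (F g)"
  proof
    fix c assume c: "c \<in> {c \<in> snd (Phi ?E F). c \<subseteq> fst (F g)}"
    then obtain h where h: "h \<in> ?E" "c \<in> snd (F h)" unfolding Phi_def by auto
    have cg: "c \<subseteq> fst (F g)" using c by simp
    show "c \<in> snd (F g)"
    proof (cases "h = g")
      case True then show ?thesis using h by simp
    next
      case False
      have ch: "c \<subseteq> fst (F h)" "card c = 2" using tb[OF h(1)] h(2) by auto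
      have "fst (F g) \<inter> fst (F h) \<subseteq> K" using sf(6) g h(1) False by blast
      then have cK: "c \<subseteq> K" using cg ch by blast
      have "c \<subseteq> g" using cK cg sf(5) g by blast
      then have "c = g" using ch(2) g by (intro edges_sub_eq) (auto simp: edges_of_iff)
      moreover have "c \<subseteq> h" using cK ch(1) sf(5) h(1) by blast
      then have "c = h" using ch(2) h(1) by (intro edges_sub_eq) (auto simp: edges_of_iff)
      ultimately show ?thesis using False by simp
    qed
  qed
qed


lemma str_half:
  assumes A: "(K,F) \<in> Str r q e V" and B: "(K',F') \<in> Str r q e V"
    and eqT: "Phi (edges_of K - {e}) F = Phi (edges_of K' - {e}) F'"
  shows "K' \<subseteq> K" "K' = K \<Longrightarrow> \<forall>g\<in>edges_of K - {e}. fst (F' g) \<subseteq> fst (F g)"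
proof -
  let ?E = "edges_of K - {e}" and ?E' = "edges_of K' - {e}"
  let ?T = "Phi ?E F"
  note sf = str_facts[OF A] and sf' = str_facts[OF B]
  obtain Cf where Cf: "\<forall>h\<in>?E. gt r h (F h) q (Cf h)"
    and gA: "gt r e ?T k (edges_of K \<union> (\<Union>h\<in>?E. Cf h))" using str_gt[OF A] by blast
  obtain Cf' where Cf': "\<forall>h\<in>?E'. gt r h (F' h) q (Cf' h)"
    and gB0: "gt r e (Phi ?E' F') k (edges_of K' \<union> (\<Union>h\<in>?E'. Cf' h))" using str_gt[OF B] by blast
  have gB: "gt r e ?T k (edges_of K' \<union> (\<Union>h\<in>?E'. Cf' h))" using gB0 eqT by simp
  let ?CA = "edges_of K \<union> (\<Union>h\<in>?E. Cf h)" and ?CB = "edges_of K' \<union> (\<Union>h\<in>?E'. Cf' h)"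
  have clA: "\<forall>X g. finite X \<longrightarrow> card X = r \<longrightarrow> g \<in> edges_of X \<longrightarrow> edges_of X - {g} \<subseteq> ?CA \<longrightarrow> g \<in> ?CA"
    by (rule gt_closed[OF gA r5])
  have sA: "snd ?T \<subseteq> ?CA" using gt_basic[OF gA r3] by blast
  have BA: "?CB \<subseteq> ?CA" using gt_sub[OF gB r3 clA] sA by blast
  have VT: "fst ?T = V" by (rule str_V[OF A])
  have CfV: "\<forall>h\<in>?E. \<forall>c\<in>Cf h. c \<subseteq> fst (F h)"
  proof (intro ballI)
    fix h c assume "h \<in> ?E" "c \<in> Cf h"
    then show "c \<subseteq> fst (F h)" using gt_basic[OF bspec[OF Cf] r3] by blast
  qed
  have locA: "\<forall>h\<in>?E. \<forall>x\<in>fst (F h) - K. \<forall>y. {x,y} \<in> ?CA \<longrightarrow> y \<in> fst (F h)"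
  proof (intro ballI allI impI)
    fix h x y assume h: "h \<in> ?E" and x: "x \<in> fst (F h) - K" and xy: "{x,y} \<in> ?CA"
    show "y \<in> fst (F h)"
      by (rule loc_gen[of ?E Cf "\<lambda>h. fst (F h)" K h x y]) (use CfV sf(6) h x xy in auto)
  qed
  show KK: "K' \<subseteq> K"
  proof
    fix x assume xK': "x \<in> K'"
    show "x \<in> K"
    proof (rule ccontr)
      assume xK: "x \<notin> K"
      have "x \<in> V" using xK' sf'(4) by blast
      then have "x \<in> (\<Union>h\<in>?E. fst (F h))" using VT unfolding Phi_def by simp
      then obtain h where h: "h \<in> ?E" "x \<in> fst (F h)" by blast
      have K'h: "K' \<subseteq> fst (F h)"
      proof
        fix y assume y: "y \<in> K'"
        show "y \<in> fst (F h)"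
        proof (cases "y = x")
          case True then show ?thesis using h by simp
        next
          case False
          then have "{x,y} \<in> edges_of K'" using xK' y by (intro pair_in_edges) auto
          then have "{x,y} \<in> ?CA" using BA by blast
          then show ?thesis using locA h xK by blast
        qed
      qed
      then have "e \<subseteq> fst (F h) \<inter> K" using sf'(3) sf(3) by blast
      then have "e \<subseteq> h" using sf(5) h(1) by blast
      then have "e = h" using e2 h(1) by (intro edges_sub_eq) (auto simp: edges_of_iff)
      then show False using h(1) by simp
    qed
  qed
  assume KK': "K' = K"
  show "\<forall>g\<in>?E. fst (F' g) \<subseteq> fst (F g)"
  proof
    fix g assume g: "g \<in> ?E"
    have g': "g \<in> ?E'" using g KK' by simp
    have gt': "gt r g (F' g) q (Cf' g)" using Cf' g' by blast
    have Ec: "\<forall>h\<in>?E. card h = 2" by (auto simp: edges_of_iff)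
    have inter: "\<forall>h\<in>?E. fst (F h) \<inter> K = h" using sf(5) by blast
    have L: "Cf' g \<subseteq> ?CA \<longrightarrow> g \<subseteq> fst (F g) \<longrightarrow> fst (F' g) \<inter> K \<subseteq> g \<longrightarrow>
        fst (F' g) \<subseteq> K \<union> (\<Union>h\<in>?E. fst (F h)) \<longrightarrow> fst (F' g) \<subseteq> fst (F g)"
      by (rule gt_local[OF gt' r3 locA inter sf(6) g Ec])
    have a1: "Cf' g \<subseteq> ?CA" using BA g' by blast
    have a2: "g \<subseteq> fst (F g)" using sf(5) g by blast
    have a3: "fst (F' g) \<inter> K \<subseteq> g" using sf'(5) g' KK' by blast
    have "fst (F' g) \<subseteq> V" using sf'(5) g' by blast
    then have a4: "fst (F' g) \<subseteq> K \<union> (\<Union>h\<in>?E. fst (F h))" using VT unfolding Phi_def by auto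
    show "fst (F' g) \<subseteq> fst (F g)" using L a1 a2 a3 a4 by blast
  qed
qed

lemma str_inj:
  assumes A: "(K,F) \<in> Str r q e V" and B: "(K',F') \<in> Str r q e V"
    and eqT: "Phi (edges_of K - {e}) F = Phi (edges_of K' - {e}) F'"
  shows "K = K' \<and> F = F'"
proof -
  have KK: "K = K'" using str_half(1)[OF A B eqT] str_half(1)[OF B A eqT[symmetric]] by blast
  let ?E = "edges_of K - {e}"
  have f1: "\<forall>g\<in>?E. fst (F' g) \<subseteq> fst (F g)" using str_half(2)[OF A B eqT] KK by simp
  have f2: "\<forall>g\<in>?E. fst (F g) \<subseteq> fst (F' g)" using str_half(2)[OF B A eqT[symmetric]] KK by simp
  have B': "(K,F') \<in> Str r q e V" using B KK by simp
  have eqT': "Phi ?E F = Phi ?E F'" using eqT KK by simp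
  have "F g = F' g" for g
  proof (cases "g \<in> ?E")
    case True
    have "fst (F g) = fst (F' g)" using f1 f2 True by blast
    moreover have "snd (F g) = snd (F' g)"
      using snd_recover[OF A True] snd_recover[OF B' True] eqT' \<open>fst (F g) = fst (F' g)\<close> by simp
    ultimately show ?thesis by (rule prod_eqI)
  next
    case False
    then show ?thesis using str_facts(7)[OF A] str_facts(7)[OF B'] by simp
  qed
  then show ?thesis using KK by blast
qed

lemma str_surj:
  assumes T: "btwg r e T k" "fst T = V"
  shows "\<exists>K F. (K,F) \<in> Str r q e V \<and> T = Phi (edges_of K - {e}) F"
proof -
  obtain K Tg j where K: "finite K" "card K = r" "e \<subseteq> K"
    and br: "\<forall>f \<in> edges_of K - {e}. twg r f (Tg f) j"
    and disj: "\<forall>f \<in> edges_of K - {e}. \<forall>f' \<in> edges_of K - {e}. f \<noteq> f' \<longrightarrow> fst (Tg f) \<inter> fst (Tg f') \<subseteq> K"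
    and TT: "T = ((\<Union>f \<in> edges_of K - {e}. fst (Tg f)), (\<Union>f \<in> edges_of K - {e}. snd (Tg f)))"
    and kj: "k = 1 + (\<Sum>f \<in> edges_of K - {e}. j)"
    using T(1) unfolding btwg_def by blast
  let ?E = "edges_of K - {e}"
  have cE: "card ?E = (r choose 2) - 1" by (rule card_E[OF K])
  have m0: "(r choose 2) - 1 > 0" using choose2_ge[OF r5] by simp
  have "k = 1 + ((r choose 2) - 1) * j" using kj cE by simp
  then have jq: "j = q" using kq m0 by simp
  note ef = edges_facts[OF K(1,2) r3 K(3) e2]
  have brc: "\<forall>f\<in>?E. finite (fst (Tg f)) \<and> f \<subseteq> fst (Tg f) \<and> card (fst (Tg f)) \<le> (r-2)*j + 2"
  proof
    fix f assume "f \<in> ?E"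
    then have "twg r f (Tg f) j" using br by blast
    from twg_basic[OF this r3] show "finite (fst (Tg f)) \<and> f \<subseteq> fst (Tg f) \<and> card (fst (Tg f)) \<le> (r-2)*j + 2" by simp
  qed
  have cT: "card (\<Union>f\<in>?E. fst (Tg f)) = (r-2)*(1 + (\<Sum>f\<in>?E. j)) + 2"
    using T(2) cardV kj TT by simp
  have eqs: "\<forall>f\<in>?E. fst (Tg f) \<inter> K = f \<and> card (fst (Tg f)) = (r-2)*j + 2"
    by (rule step_card_gen(2)[OF K(1,2) r3 ef brc disj cT])
  have VU: "V = (\<Union>f\<in>?E. fst (Tg f))" using T(2) TT by simp
  have KV: "K \<subseteq> V"
  proof
    fix x assume "x \<in> K"
    then obtain f where "f \<in> ?E" "x \<in> f" using ef(3) by blast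
    then show "x \<in> V" using VU brc by blast
  qed
  define F where "F = (\<lambda>h. if h \<in> ?E then Tg h else undefined)"
  have FE: "F h = Tg h" if "h \<in> ?E" for h using that unfolding F_def by simp
  have "F \<in> Fam r q ((r-2)*q) ?E (V - K)"
    unfolding Fam_def
  proof (intro CollectI conjI)
    show "\<forall>x. x \<notin> ?E \<longrightarrow> F x = undefined" unfolding F_def by simp
    show "\<forall>h\<in>?E. twg r h (F h) q \<and> fst (F h) - h \<subseteq> V - K \<and> card (fst (F h) - h) = (r-2)*q"
    proof
      fix h assume h: "h \<in> ?E"
      have a: "twg r h (F h) q" using br h FE jq by simp
      have b: "fst (F h) \<inter> K = h" "card (fst (F h)) = (r-2)*q + 2" "h \<subseteq> fst (F h)" "finite (fst (F h))"
        using eqs brc h FE jq by auto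
      have "fst (F h) \<subseteq> V" using VU h FE by auto
      then have c: "fst (F h) - h \<subseteq> V - K" using b(1) by blast
      have "card (fst (F h) - h) = card (fst (F h)) - card h" using b(3,4) by (simp add: card_Diff_subset finite_subset)
      then have d: "card (fst (F h) - h) = (r-2)*q" using b(2) h by (simp add: edges_of_iff)
      show "twg r h (F h) q \<and> fst (F h) - h \<subseteq> V - K \<and> card (fst (F h) - h) = (r-2)*q" using a c d by simp
    qed
    show "\<forall>h\<in>?E. \<forall>h'\<in>?E. h \<noteq> h' \<longrightarrow> (fst (F h) - h) \<inter> (fst (F h') - h') = {}"
    proof (intro ballI impI)
      fix h h' assume hh: "h \<in> ?E" "h' \<in> ?E" "h \<noteq> h'"
      have "fst (F h) \<inter> fst (F h') \<subseteq> K" using disj hh FE by simp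
      moreover have "fst (F h) \<inter> K = h" using eqs hh(1) FE by simp
      ultimately show "(fst (F h) - h) \<inter> (fst (F h') - h') = {}" by blast
    qed
  qed
  then have "(K,F) \<in> Str r q e V" unfolding Str_def using KV K by simp
  moreover have "T = Phi ?E F" unfolding TT Phi_def using FE by simp
  ultimately show ?thesis by blast
qed

end

definition mapT :: "('a \<Rightarrow> 'b) \<Rightarrow> 'a set \<times> 'a set set \<Rightarrow> 'b set \<times> 'b set set" where
  "mapT \<pi> T = (\<pi> ` fst T, (image \<pi>) ` snd T)"

lemma edges_of_image:
  assumes "inj_on \<pi> K"
  shows "edges_of (\<pi> ` K) = (image \<pi>) ` edges_of K"
proof
  show "edges_of (\<pi> ` K) \<subseteq> (image \<pi>) ` edges_of K"
  proof
    fix c assume c: "c \<in> edges_of (\<pi> ` K)"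
    then have cK: "c \<subseteq> \<pi> ` K" "card c = 2" by (auto simp: edges_of_iff)
    define d where "d = K \<inter> \<pi> -` c"
    have dK: "d \<subseteq> K" unfolding d_def by blast
    have cd: "\<pi> ` d = c" unfolding d_def using cK(1) by blast
    have "card d = card c" using cd card_image[OF inj_on_subset[OF assms dK]] by simp
    then have "d \<in> edges_of K" using dK cK(2) by (simp add: edges_of_iff)
    then show "c \<in> (image \<pi>) ` edges_of K" using cd by blast
  qed
  show "(image \<pi>) ` edges_of K \<subseteq> edges_of (\<pi> ` K)"
  proof
    fix c assume "c \<in> (image \<pi>) ` edges_of K"
    then obtain d where d: "d \<in> edges_of K" "c = \<pi> ` d" by blast
    then have dK: "d \<subseteq> K" "card d = 2" by (auto simp: edges_of_iff)
    have "card c = 2" using d(2) dK card_image[OF inj_on_subset[OF assms dK(1)]] by simp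
    then show "c \<in> edges_of (\<pi> ` K)" using d(2) dK(1) by (auto simp: edges_of_iff)
  qed
qed

lemma twg_map:
  assumes "twg r f T k" "3 \<le> r" "inj_on \<pi> (fst T)"
  shows "twg r (\<pi> ` f) (mapT \<pi> T) k"
  using assms(1,3)
proof (induction rule: twg.induct)
  case (base e)
  have "finite e" using base(1) by (intro card_ge_0_finite) simp
  have "card (\<pi> ` e) = 2" using base card_image by fastforce
  then show ?case unfolding mapT_def using twg.base by fastforce
next
  case (step K e Tg ord)
  let ?E = "edges_of K - {e}"
  let ?V = "\<Union>f\<in>?E. fst (Tg f)"
  have injV: "inj_on \<pi> ?V" using step.prems by simp
  note ef = edges_facts[OF step(1,2) assms(2) step(3,4)]
  have tb: "f \<subseteq> fst (Tg f)" if "f \<in> ?E" for f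
  proof -
    have "twg r f (Tg f) (ord f)" using bspec[OF step.IH that] by simp
    then show ?thesis using twg_basic[OF _ assms(2)] by blast
  qed
  have KV: "K \<subseteq> ?V"
  proof
    fix x assume "x \<in> K"
    then obtain f where "f \<in> ?E" "x \<in> f" using ef(3) by blast
    then show "x \<in> ?V" using tb by blast
  qed
  have injK: "inj_on \<pi> K" using inj_on_subset[OF injV KV] .
  have injf: "inj_on \<pi> (fst (Tg f))" if "f \<in> ?E" for f using inj_on_subset[OF injV] that by blast
  have IH: "twg r (\<pi> ` f) (mapT \<pi> (Tg f)) (ord f)" if "f \<in> ?E" for f
    using bspec[OF step.IH that] injf[OF that] by simp
  let ?K2 = "\<pi> ` K" and ?e2 = "\<pi> ` e"
  have injE: "inj_on (image \<pi>) (edges_of K)"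
    by (rule inj_onI) (use injK in \<open>auto simp: edges_of_iff inj_on_image_eq_iff\<close>)
  have E2: "edges_of ?K2 - {?e2} = (image \<pi>) ` ?E"
  proof -
    have eE: "e \<in> edges_of K" using step(3,4) by (simp add: edges_of_iff)
    have "edges_of ?K2 - {?e2} = (image \<pi>) ` edges_of K - (image \<pi>) ` {e}"
      using edges_of_image[OF injK] by simp
    also have "\<dots> = (image \<pi>) ` ?E"
      using inj_on_image_set_diff[OF injE, of "edges_of K" "{e}"] eE by simp
    finally show ?thesis .
  qed
  define inv where "inv = (\<lambda>c. inv_into K \<pi> ` c)"
  have invc: "inv (\<pi> ` f) = f" if "f \<in> ?E" for f
  proof -
    have "f \<subseteq> K" using that by (auto simp: edges_of_iff)
    then show ?thesis unfolding inv_def using injK by simp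
  qed
  define Tg2 where "Tg2 = (\<lambda>c. mapT \<pi> (Tg (inv c)))"
  define ord2 where "ord2 = (\<lambda>c. ord (inv c))"
  have s1: "finite ?K2" using step(1) by simp
  have s2: "card ?K2 = r" using card_image[OF injK] step(2) by simp
  have s3: "?e2 \<subseteq> ?K2" using step(3) by blast
  have s4: "card ?e2 = 2" using card_image[OF inj_on_subset[OF injK step(3)]] step(4) by simp
  have s5: "\<forall>c\<in>edges_of ?K2 - {?e2}. twg r c (Tg2 c) (ord2 c)"
    unfolding E2 Tg2_def ord2_def using IH invc by auto
  have s6: "\<forall>c\<in>edges_of ?K2 - {?e2}. \<forall>c'\<in>edges_of ?K2 - {?e2}. c \<noteq> c' \<longrightarrow> fst (Tg2 c) \<inter> fst (Tg2 c') \<subseteq> ?K2"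
  proof (intro ballI impI)
    fix c c' assume c: "c \<in> edges_of ?K2 - {?e2}" "c' \<in> edges_of ?K2 - {?e2}" "c \<noteq> c'"
    then obtain f f' where f: "f \<in> ?E" "f' \<in> ?E" "c = \<pi> ` f" "c' = \<pi> ` f'" unfolding E2 by blast
    have ff: "f \<noteq> f'" using f c(3) by blast
    have "fst (Tg2 c) \<inter> fst (Tg2 c') = \<pi> ` fst (Tg f) \<inter> \<pi> ` fst (Tg f')"
      unfolding Tg2_def mapT_def using invc f by simp
    also have "\<dots> = \<pi> ` (fst (Tg f) \<inter> fst (Tg f'))"
      by (rule inj_on_image_Int[OF injV, symmetric]) (use f in blast)+
    also have "\<dots> \<subseteq> ?K2" using step(5) f ff by blast
    finally show "fst (Tg2 c) \<inter> fst (Tg2 c') \<subseteq> ?K2" .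
  qed
  have tw: "twg r ?e2 ((\<Union>c\<in>edges_of ?K2 - {?e2}. fst (Tg2 c)), (\<Union>c\<in>edges_of ?K2 - {?e2}. snd (Tg2 c)))
      (1 + (\<Sum>c\<in>edges_of ?K2 - {?e2}. ord2 c))"
    by (rule twg.step[OF s1 s2 s3 s4 s5 s6])
  have injE2: "inj_on (image \<pi>) ?E" using injE by (rule inj_on_subset) blast
  have u1: "(\<Union>c\<in>edges_of ?K2 - {?e2}. fst (Tg2 c)) = \<pi> ` ?V"
    unfolding E2 Tg2_def mapT_def using invc by (auto simp: image_UN)
  have u2: "(\<Union>c\<in>edges_of ?K2 - {?e2}. snd (Tg2 c)) = (image \<pi>) ` (\<Union>f\<in>?E. snd (Tg f))"
    unfolding E2 Tg2_def mapT_def using invc by (auto simp: image_UN)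
  have u3: "(\<Sum>c\<in>edges_of ?K2 - {?e2}. ord2 c) = (\<Sum>f\<in>?E. ord f)"
    unfolding E2 ord2_def sum.reindex[OF injE2] using invc by simp
  show ?case using tw unfolding u1 u2 u3 mapT_def by simp
qed

lemma mapT_inv:
  assumes "inj_on \<pi> A" "fst T \<subseteq> A" "\<forall>c\<in>snd T. c \<subseteq> fst T"
  shows "mapT (inv_into A \<pi>) (mapT \<pi> T) = T"
proof -
  have a: "inv_into A \<pi> ` \<pi> ` S = S" if "S \<subseteq> A" for S using assms(1) that by simp
  have "fst (mapT (inv_into A \<pi>) (mapT \<pi> T)) = fst T" unfolding mapT_def using a assms(2) by simp
  moreover have "snd (mapT (inv_into A \<pi>) (mapT \<pi> T)) = snd T"
  proof -
    have "snd (mapT (inv_into A \<pi>) (mapT \<pi> T)) = (\<lambda>c. inv_into A \<pi> ` \<pi> ` c) ` snd T"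
      unfolding mapT_def by (simp add: image_image)
    also have "\<dots> = (\<lambda>c. c) ` snd T"
    proof (rule image_cong[OF refl])
      fix c assume "c \<in> snd T"
      then have "c \<subseteq> A" using assms(2,3) by blast
      then show "inv_into A \<pi> ` \<pi> ` c = c" using a by blast
    qed
    finally show ?thesis by simp
  qed
  ultimately show ?thesis by (rule prod_eqI)
qed

lemma mapT_inv2:
  assumes "\<pi> ` A = B" "fst T \<subseteq> B" "\<forall>c\<in>snd T. c \<subseteq> fst T"
  shows "mapT \<pi> (mapT (inv_into A \<pi>) T) = T"
proof -
  have a: "\<pi> ` inv_into A \<pi> ` S = S" if "S \<subseteq> B" for S using image_inv_into_cancel[OF assms(1) that] .
  have "fst (mapT \<pi> (mapT (inv_into A \<pi>) T)) = fst T" unfolding mapT_def using a assms(2) by simp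
  moreover have "snd (mapT \<pi> (mapT (inv_into A \<pi>) T)) = snd T"
  proof -
    have "snd (mapT \<pi> (mapT (inv_into A \<pi>) T)) = (\<lambda>c. \<pi> ` inv_into A \<pi> ` c) ` snd T"
      unfolding mapT_def by (simp add: image_image)
    also have "\<dots> = (\<lambda>c. c) ` snd T"
    proof (rule image_cong[OF refl])
      fix c assume "c \<in> snd T"
      then have "c \<subseteq> B" using assms(2,3) by blast
      then show "\<pi> ` inv_into A \<pi> ` c = c" using a by blast
    qed
    finally show ?thesis by simp
  qed
  ultimately show ?thesis by (rule prod_eqI)
qed

lemma count_relabel:
  fixes h P e' V' :: "'a set"
  assumes r3: "3 \<le> r" and h2: "card h = 2" and fP: "finite P" and hP: "h \<inter> P = {}"
    and e2: "card e' = 2" and eV: "e' \<subseteq> V'" and fV: "finite V'" and cV: "card V' = card P + 2"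
  shows "card {T. twg r h T q \<and> fst T = h \<union> P} = card {T. twg r e' T q \<and> fst T = V'}"
proof -
  have fh: "finite h" using h2 by (intro card_ge_0_finite) simp
  have fe: "finite e'" using e2 by (intro card_ge_0_finite) simp
  have cVe: "card (V' - e') = card P" using cV e2 eV fe by (simp add: card_Diff_subset)
  obtain \<pi>1 where p1: "bij_betw \<pi>1 h e'" using finite_same_card_bij[OF fh fe] h2 e2 by auto
  obtain \<pi>2 where p2: "bij_betw \<pi>2 P (V' - e')" using finite_same_card_bij[OF fP, of "V' - e'"] fV cVe by auto
  define \<pi> where "\<pi> = (\<lambda>x. if x \<in> h then \<pi>1 x else \<pi>2 x)"
  have b1: "bij_betw \<pi> h e'" using p1 unfolding \<pi>_def by (rule bij_betw_cong[THEN iffD1, rotated]) simp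
  have b2: "bij_betw \<pi> P (V' - e')" using p2 unfolding \<pi>_def
    by (rule bij_betw_cong[THEN iffD1, rotated]) (use hP in auto)
  have b: "bij_betw \<pi> (h \<union> P) V'"
  proof -
    have "bij_betw \<pi> (h \<union> P) (e' \<union> (V' - e'))" by (rule bij_betw_combine[OF b1 b2]) blast
    moreover have "e' \<union> (V' - e') = V'" using eV by blast
    ultimately show ?thesis by simp
  qed
  let ?A = "h \<union> P"
  let ?\<pi>' = "inv_into ?A \<pi>"
  have inj: "inj_on \<pi> ?A" using b by (simp add: bij_betw_def)
  have img: "\<pi> ` ?A = V'" using b by (simp add: bij_betw_def)
  have b': "bij_betw ?\<pi>' V' ?A" using bij_betw_inv_into[OF b] .
  have inj': "inj_on ?\<pi>' V'" using b' by (simp add: bij_betw_def)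
  have img': "?\<pi>' ` V' = ?A" using b' by (simp add: bij_betw_def)
  have he: "\<pi> ` h = e'" using b1 by (simp add: bij_betw_def)
  have "?\<pi>' ` \<pi> ` h = h" by (rule inv_into_image_cancel[OF inj]) blast
  then have eh: "?\<pi>' ` e' = h" unfolding he .
  let ?S1 = "{T. twg r h T q \<and> fst T = ?A}" and ?S2 = "{T. twg r e' T q \<and> fst T = V'}"
  have "bij_betw (mapT \<pi>) ?S1 ?S2"
  proof (rule bij_betw_byWitness[where f' = "mapT ?\<pi>'"])
    show "\<forall>a\<in>?S1. mapT ?\<pi>' (mapT \<pi> a) = a"
    proof
      fix T assume T: "T \<in> ?S1"
      then have "\<forall>c\<in>snd T. c \<subseteq> fst T" using twg_basic[OF _ r3] by blast
      then show "mapT ?\<pi>' (mapT \<pi> T) = T" using mapT_inv[OF inj] T by simp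
    qed
    show "\<forall>a\<in>?S2. mapT \<pi> (mapT ?\<pi>' a) = a"
    proof
      fix T assume T: "T \<in> ?S2"
      then have "\<forall>c\<in>snd T. c \<subseteq> fst T" using twg_basic[OF _ r3] by blast
      then show "mapT \<pi> (mapT ?\<pi>' T) = T" using mapT_inv2[OF img] T by simp
    qed
    show "mapT \<pi> ` ?S1 \<subseteq> ?S2"
    proof
      fix T' assume "T' \<in> mapT \<pi> ` ?S1"
      then obtain T where T: "T \<in> ?S1" "T' = mapT \<pi> T" by blast
      have "twg r (\<pi> ` h) (mapT \<pi> T) q" using twg_map[OF _ r3, of h T q \<pi>] T inj by simp
      moreover have "fst (mapT \<pi> T) = V'" using T img unfolding mapT_def by simp
      ultimately show "T' \<in> ?S2" using T he by simp
    qed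
    show "mapT ?\<pi>' ` ?S2 \<subseteq> ?S1"
    proof
      fix T' assume "T' \<in> mapT ?\<pi>' ` ?S2"
      then obtain T where T: "T \<in> ?S2" "T' = mapT ?\<pi>' T" by blast
      have "twg r (?\<pi>' ` e') (mapT ?\<pi>' T) q" using twg_map[OF _ r3, of e' T q ?\<pi>'] T inj' by simp
      moreover have "fst (mapT ?\<pi>' T) = ?A" using T img' unfolding mapT_def by simp
      ultimately show "T' \<in> ?S1" using T eh by simp
    qed
  qed
  then show ?thesis by (rule bij_betw_same_card)
qed

lemma fam_empty: "Fam r q s {} U = {\<lambda>_. undefined}"
  unfolding Fam_def by auto

lemma finite_graphs:
  assumes "finite W"
  shows "finite {T :: 'a set \<times> 'a set set. fst T \<subseteq> W \<and> snd T \<subseteq> Pow W}"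
proof -
  have "{T :: 'a set \<times> 'a set set. fst T \<subseteq> W \<and> snd T \<subseteq> Pow W} \<subseteq> Pow W \<times> Pow (Pow W)" by auto
  moreover have "finite (Pow W \<times> Pow (Pow W))" using assms by simp
  ultimately show ?thesis by (rule finite_subset)
qed

lemma card_A:
  assumes r3: "3 \<le> r" and fU: "finite U" and h2: "card h = 2" and hU: "h \<inter> U = {}"
    and hyp: "\<forall>P. P \<subseteq> U \<longrightarrow> card P = s \<longrightarrow> card {T. twg r h T q \<and> fst T = h \<union> P} = t"
  shows "finite {T. twg r h T q \<and> fst T - h \<subseteq> U \<and> card (fst T - h) = s}"
    "card {T. twg r h T q \<and> fst T - h \<subseteq> U \<and> card (fst T - h) = s} = (card U choose s) * t"
proof -
  let ?A = "{T. twg r h T q \<and> fst T - h \<subseteq> U \<and> card (fst T - h) = s}"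
  let ?Ps = "{P. P \<subseteq> U \<and> card P = s}"
  let ?B = "\<lambda>P. {T. twg r h T q \<and> fst T = h \<union> P}"
  have fh: "finite h" using h2 by (intro card_ge_0_finite) simp
  have tb: "h \<subseteq> fst T \<and> (\<forall>c\<in>snd T. c \<subseteq> fst T)" if "twg r h T q" for T
    using twg_basic[OF that r3] by blast
  have eq: "?A = (\<Union>P\<in>?Ps. ?B P)"
  proof
    show "?A \<subseteq> (\<Union>P\<in>?Ps. ?B P)"
    proof
      fix T assume T: "T \<in> ?A"
      then have "h \<subseteq> fst T" using tb by simp
      then have "fst T = h \<union> (fst T - h)" by blast
      then show "T \<in> (\<Union>P\<in>?Ps. ?B P)" using T by blast
    qed
    show "(\<Union>P\<in>?Ps. ?B P) \<subseteq> ?A"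
    proof
      fix T assume "T \<in> (\<Union>P\<in>?Ps. ?B P)"
      then obtain P where P: "P \<subseteq> U" "card P = s" "twg r h T q" "fst T = h \<union> P" by blast
      have "fst T - h = P" using P(1,4) hU by blast
      then show "T \<in> ?A" using P by simp
    qed
  qed
  have fPs: "finite ?Ps" using fU by simp
  have fB: "finite (?B P)" if "P \<in> ?Ps" for P
  proof -
    have "P \<subseteq> U" using that by simp
    then have "finite P" using fU by (rule finite_subset)
    then have fhP: "finite (h \<union> P)" using fh by simp
    have "?B P \<subseteq> {T. fst T \<subseteq> h \<union> P \<and> snd T \<subseteq> Pow (h \<union> P)}"
    proof
      fix T assume "T \<in> ?B P"
      then have T: "twg r h T q" "fst T = h \<union> P" by auto
      then show "T \<in> {T. fst T \<subseteq> h \<union> P \<and> snd T \<subseteq> Pow (h \<union> P)}" using tb[OF T(1)] by auto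
    qed
    then show ?thesis using finite_graphs[OF fhP] by (rule finite_subset)
  qed
  have fUB: "finite (\<Union>P\<in>?Ps. ?B P)" using fPs fB by (rule finite_UN_I)
  show "finite ?A" unfolding eq by (rule fUB)
  have "card (\<Union>P\<in>?Ps. ?B P) = (\<Sum>P\<in>?Ps. card (?B P))"
  proof (rule card_UN_disjoint[OF fPs])
    show "\<forall>i\<in>?Ps. finite (?B i)" using fB by blast
    show "\<forall>i\<in>?Ps. \<forall>j\<in>?Ps. i \<noteq> j \<longrightarrow> ?B i \<inter> ?B j = {}"
    proof (intro ballI impI)
      fix i j assume ij: "i \<in> ?Ps" "j \<in> ?Ps" "i \<noteq> j"
      show "?B i \<inter> ?B j = {}"
      proof (rule ccontr)
        assume "?B i \<inter> ?B j \<noteq> {}"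
        then obtain T where "T \<in> ?B i" "T \<in> ?B j" by blast
        then have hij: "h \<union> i = h \<union> j" by simp
        have "i \<subseteq> U" "j \<subseteq> U" using ij(1,2) by auto
        then have "i = (h \<union> i) - h" "j = (h \<union> j) - h" using hU by auto
        then have "i = j" using hij by simp
        then show False using ij(3) by simp
      qed
    qed
  qed
  also have "\<dots> = (\<Sum>P\<in>?Ps. t)"
  proof (rule sum.cong[OF refl])
    fix P assume "P \<in> ?Ps"
    then show "card (?B P) = t" using hyp by simp
  qed
  also have "\<dots> = (card U choose s) * t" using n_subsets[OF fU, of s] by simp
  finally show "card ?A = (card U choose s) * t" unfolding eq .
qed

lemma fam_count:
  fixes E :: "'a set set"
  assumes r3: "3 \<le> r" and fE: "finite E"
  shows "\<forall>U. finite U \<longrightarrow> (\<forall>h\<in>E. card h = 2 \<and> h \<inter> U = {}) \<longrightarrow>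
     (\<forall>h\<in>E. \<forall>P. P \<subseteq> U \<longrightarrow> card P = s \<longrightarrow> card {T. twg r h T q \<and> fst T = h \<union> P} = t) \<longrightarrow>
     finite (Fam r q s E U) \<and> card (Fam r q s E U) = (\<Prod>i<card E. (card U - i*s) choose s) * t ^ card E"
  using fE
proof (induction E rule: finite_induct)
  case empty
  then show ?case by (simp add: fam_empty)
next
  case (insert h0 E)
  show ?case
  proof (intro allI impI)
    fix U :: "'a set"
    assume fU: "finite U" and hU: "\<forall>h\<in>insert h0 E. card h = 2 \<and> h \<inter> U = {}"
      and hyp: "\<forall>h\<in>insert h0 E. \<forall>P. P \<subseteq> U \<longrightarrow> card P = s \<longrightarrow> card {T. twg r h T q \<and> fst T = h \<union> P} = t"
    let ?A = "{T. twg r h0 T q \<and> fst T - h0 \<subseteq> U \<and> card (fst T - h0) = s}"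
    let ?Sig = "Sigma ?A (\<lambda>T. Fam r q s E (U - (fst T - h0)))"
    let ?X = "(\<Prod>i<card E. (card U - s - i*s) choose s) * t ^ card E"
    have h02: "card h0 = 2" "h0 \<inter> U = {}" using hU by auto
    have hyp0: "\<forall>P. P \<subseteq> U \<longrightarrow> card P = s \<longrightarrow> card {T. twg r h0 T q \<and> fst T = h0 \<union> P} = t"
      using hyp by simp
    note cA = card_A[OF r3 fU h02 hyp0]
    have IHT: "finite (Fam r q s E (U - (fst T - h0))) \<and> card (Fam r q s E (U - (fst T - h0))) = ?X"
      if T: "T \<in> ?A" for T
    proof -
      let ?U = "U - (fst T - h0)"
      have sub: "fst T - h0 \<subseteq> U" and cs: "card (fst T - h0) = s" using T by auto
      have fS: "finite (fst T - h0)" using finite_subset[OF sub fU] .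
      have cU: "card ?U = card U - s" using card_Diff_subset[OF fS sub] cs by simp
      have a1: "finite ?U" using fU by simp
      have a2: "\<forall>h\<in>E. card h = 2 \<and> h \<inter> ?U = {}" using hU by auto
      have a3: "\<forall>h\<in>E. \<forall>P. P \<subseteq> ?U \<longrightarrow> card P = s \<longrightarrow> card {T. twg r h T q \<and> fst T = h \<union> P} = t"
        using hyp by blast
      have "finite (Fam r q s E ?U) \<and> card (Fam r q s E ?U) = (\<Prod>i<card E. (card ?U - i*s) choose s) * t ^ card E"
        using insert.IH a1 a2 a3 by blast
      then show ?thesis unfolding cU .
    qed
    have bij: "bij_betw (\<lambda>F. (F h0, F(h0 := undefined))) (Fam r q s (insert h0 E) U) ?Sig"
    proof (rule bij_betw_byWitness[where f' = "\<lambda>(T,G). G(h0 := T)"])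
      show "\<forall>a\<in>Fam r q s (insert h0 E) U. (\<lambda>(T,G). G(h0 := T)) (a h0, a(h0 := undefined)) = a" by simp
      show "\<forall>a'\<in>?Sig. (\<lambda>F. (F h0, F(h0 := undefined))) ((\<lambda>(T,G). G(h0 := T)) a') = a'"
      proof
        fix a' assume "a' \<in> ?Sig"
        then obtain T G where a': "a' = (T,G)" "G \<in> Fam r q s E (U - (fst T - h0))" by blast
        then have "G h0 = undefined" using insert.hyps(2) unfolding Fam_def by simp
        then have "G(h0 := undefined) = G" by auto
        then show "(\<lambda>F. (F h0, F(h0 := undefined))) ((\<lambda>(T,G). G(h0 := T)) a') = a'" using a' by simp
      qed
      show "(\<lambda>F. (F h0, F(h0 := undefined))) ` Fam r q s (insert h0 E) U \<subseteq> ?Sig"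
      proof
        fix x assume "x \<in> (\<lambda>F. (F h0, F(h0 := undefined))) ` Fam r q s (insert h0 E) U"
        then obtain F where F: "F \<in> Fam r q s (insert h0 E) U" "x = (F h0, F(h0 := undefined))" by blast
        have Fd: "\<forall>x. x \<notin> insert h0 E \<longrightarrow> F x = undefined"
          "\<forall>h\<in>insert h0 E. twg r h (F h) q \<and> fst (F h) - h \<subseteq> U \<and> card (fst (F h) - h) = s"
          "\<forall>h\<in>insert h0 E. \<forall>h'\<in>insert h0 E. h \<noteq> h' \<longrightarrow> (fst (F h) - h) \<inter> (fst (F h') - h') = {}"
          using F(1) unfolding Fam_def by auto
        have "F h0 \<in> ?A" using Fd(2) by simp
        moreover have "F(h0 := undefined) \<in> Fam r q s E (U - (fst (F h0) - h0))"
          unfolding Fam_def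
        proof (intro CollectI conjI)
          show "\<forall>x. x \<notin> E \<longrightarrow> (F(h0 := undefined)) x = undefined" using Fd(1) by simp
          show "\<forall>h\<in>E. twg r h ((F(h0 := undefined)) h) q \<and> fst ((F(h0 := undefined)) h) - h \<subseteq> U - (fst (F h0) - h0)
                \<and> card (fst ((F(h0 := undefined)) h) - h) = s"
          proof
            fix h assume h: "h \<in> E"
            then have hh: "h \<noteq> h0" using insert.hyps(2) by blast
            have "(fst (F h) - h) \<inter> (fst (F h0) - h0) = {}" using Fd(3) h hh by blast
            then show "twg r h ((F(h0 := undefined)) h) q \<and> fst ((F(h0 := undefined)) h) - h \<subseteq> U - (fst (F h0) - h0)
                \<and> card (fst ((F(h0 := undefined)) h) - h) = s" using Fd(2) h hh by auto
          qed
          show "\<forall>h\<in>E. \<forall>h'\<in>E. h \<noteq> h' \<longrightarrow> (fst ((F(h0 := undefined)) h) - h) \<inter> (fst ((F(h0 := undefined)) h') - h') = {}"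
            using Fd(3) insert.hyps(2) by auto
        qed
        ultimately show "x \<in> ?Sig" using F(2) by simp
      qed
      show "(\<lambda>(T,G). G(h0 := T)) ` ?Sig \<subseteq> Fam r q s (insert h0 E) U"
      proof
        fix x assume "x \<in> (\<lambda>(T,G). G(h0 := T)) ` ?Sig"
        then obtain y where y: "y \<in> ?Sig" "x = (\<lambda>(T,G). G(h0 := T)) y" by (rule imageE)
        obtain T G where "y = (T,G)" by (cases y)
        then have TG: "T \<in> ?A" "G \<in> Fam r q s E (U - (fst T - h0))" "x = G(h0 := T)" using y by auto
        have Gd: "\<forall>x. x \<notin> E \<longrightarrow> G x = undefined"
          "\<forall>h\<in>E. twg r h (G h) q \<and> fst (G h) - h \<subseteq> U - (fst T - h0) \<and> card (fst (G h) - h) = s"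
          "\<forall>h\<in>E. \<forall>h'\<in>E. h \<noteq> h' \<longrightarrow> (fst (G h) - h) \<inter> (fst (G h') - h') = {}"
          using TG(2) unfolding Fam_def by auto
        have h0E: "h0 \<notin> E" by (rule insert.hyps(2))
        have "G(h0 := T) \<in> Fam r q s (insert h0 E) U"
          unfolding Fam_def
        proof (intro CollectI conjI)
          show "\<forall>x. x \<notin> insert h0 E \<longrightarrow> (G(h0 := T)) x = undefined" using Gd(1) by simp
          show "\<forall>h\<in>insert h0 E. twg r h ((G(h0 := T)) h) q \<and> fst ((G(h0 := T)) h) - h \<subseteq> U
                \<and> card (fst ((G(h0 := T)) h) - h) = s"
          proof
            fix h assume h: "h \<in> insert h0 E"
            show "twg r h ((G(h0 := T)) h) q \<and> fst ((G(h0 := T)) h) - h \<subseteq> U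
                \<and> card (fst ((G(h0 := T)) h) - h) = s"
            proof (cases "h = h0")
              case True then show ?thesis using TG(1) by simp
            next
              case False
              then have "h \<in> E" using h by simp
              then show ?thesis using Gd(2) False by auto
            qed
          qed
          show "\<forall>h\<in>insert h0 E. \<forall>h'\<in>insert h0 E. h \<noteq> h' \<longrightarrow>
             (fst ((G(h0 := T)) h) - h) \<inter> (fst ((G(h0 := T)) h') - h') = {}"
          proof (intro ballI impI)
            fix h h' assume hh: "h \<in> insert h0 E" "h' \<in> insert h0 E" "h \<noteq> h'"
            show "(fst ((G(h0 := T)) h) - h) \<inter> (fst ((G(h0 := T)) h') - h') = {}"
            proof (cases "h = h0")
              case True
              then have "h' \<in> E" using hh by auto
              then show ?thesis using Gd(2) True hh(3) by auto
            next
              case False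
              note F1 = False
              then have hE: "h \<in> E" using hh by simp
              show ?thesis
              proof (cases "h' = h0")
                case True
                then show ?thesis using Gd(2) hE F1 by auto
              next
                case False
                then have "h' \<in> E" using hh by simp
                then show ?thesis using Gd(3) hE F1 False hh(3) by simp
              qed
            qed
          qed
        qed
        then show "x \<in> Fam r q s (insert h0 E) U" using TG(3) by simp
      qed
    qed
    have fSig: "finite ?Sig" using cA(1) IHT by (intro finite_SigmaI) auto
    have cSig: "card ?Sig = (\<Sum>T\<in>?A. card (Fam r q s E (U - (fst T - h0))))"
      using cA(1) IHT by (intro card_SigmaI) auto
    also have "\<dots> = (\<Sum>T\<in>?A. ?X)" using IHT by (intro sum.cong) auto
    also have "\<dots> = card ?A * ?X" by simp
    also have "\<dots> = (\<Prod>i<card (insert h0 E). (card U - i*s) choose s) * t ^ card (insert h0 E)"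
    proof -
      have "(\<Prod>i<Suc (card E). (card U - i*s) choose s) = (card U choose s) * (\<Prod>i<card E. (card U - s - i*s) choose s)"
        by (subst prod.lessThan_Suc_shift) (simp add: diff_diff_left)
      then show ?thesis using cA(2) insert.hyps by (simp add: algebra_simps)
    qed
    finally have "card ?Sig = (\<Prod>i<card (insert h0 E). (card U - i*s) choose s) * t ^ card (insert h0 E)" .
    moreover have "card (Fam r q s (insert h0 E) U) = card ?Sig" by (rule bij_betw_same_card[OF bij])
    moreover have "finite (Fam r q s (insert h0 E) U)" using bij_betw_finite[OF bij] fSig by simp
    ultimately show "finite (Fam r q s (insert h0 E) U) \<and>
       card (Fam r q s (insert h0 E) U) = (\<Prod>i<card (insert h0 E). (card U - i*s) choose s) * t ^ card (insert h0 E)"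
      by simp
  qed
qed

lemma prod_choose:
  "n*s \<le> N \<Longrightarrow> (\<Prod>i<n. (N - i*s) choose s) * fact s ^ n * fact (N - n*s) = (fact N :: nat)"
proof (induction n arbitrary: N)
  case 0
  then show ?case by simp
next
  case (Suc n)
  have sN: "s \<le> N" using Suc.prems by simp
  have "n*s \<le> N - s" using Suc.prems by simp
  note IH = Suc.IH[OF this]
  have e1: "(\<Prod>i<Suc n. (N - i*s) choose s) = (N choose s) * (\<Prod>i<n. (N - s - i*s) choose s)"
    by (subst prod.lessThan_Suc_shift) (simp add: diff_diff_left)
  have e2: "N - Suc n * s = N - s - n*s" by (simp add: diff_diff_left)
  have "(\<Prod>i<Suc n. (N - i*s) choose s) * fact s ^ Suc n * fact (N - Suc n*s)
      = (N choose s) * fact s * ((\<Prod>i<n. (N - s - i*s) choose s) * fact s ^ n * fact (N - s - n*s))"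
    unfolding e1 e2 by (simp add: algebra_simps)
  also have "\<dots> = (N choose s) * fact s * fact (N - s)" using IH by simp
  also have "\<dots> = fact N" using binomial_fact_lemma[OF sN] by (simp add: algebra_simps)
  finally show ?case .
qed

theorem lemma3p11:
  fixes r k q :: nat and e V :: "'a set"
  assumes "r \<ge> 5" and "k \<ge> 1"
    and "(r choose 2) - 1 dvd k - 1"
    and "q = (k - 1) div ((r choose 2) - 1)"
    and "card e = 2" and "e \<subseteq> V" and "finite V" and "card V = (r - 2) * k + 2"
  shows "\<forall>e' V' :: 'a set. card e' = 2 \<longrightarrow> e' \<subseteq> V' \<longrightarrow> finite V' \<longrightarrow>
            card V' = (r - 2) * q + 2 \<longrightarrow>
     real (card {T. btwg r e T k \<and> fst T = V}) =
       fact ((r - 2) * k) / fact (r - 2) *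
       (real (card {T. twg r e' T q \<and> fst T = V'}) / fact ((r - 2) * q)) ^ ((r choose 2) - 1)"
proof (intro allI impI)
  fix e' V' :: "'a set"
  assume e'2: "card e' = 2" and e'V': "e' \<subseteq> V'" and fV': "finite V'" and cV': "card V' = (r - 2) * q + 2"
  have r5: "5 \<le> r" and e2: "card e = 2" and eV: "e \<subseteq> V" and finV: "finite V"
    and cardV: "card V = (r-2)*k+2" using assms by auto
  have r3: "3 \<le> r" using r5 by simp
  define m where "m = (r choose 2) - 1"
  have m0: "0 < m" using choose2_ge[OF r5] unfolding m_def by simp
  have kq: "k = 1 + ((r choose 2) - 1) * q"
  proof -
    have "(k - 1) div m * m = k - 1" using assms(3) unfolding m_def by simp
    then have "k - 1 = m * q" using assms(4) unfolding m_def by (simp add: mult.commute)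
    then show ?thesis using assms(2) unfolding m_def by simp
  qed
  have kq': "k = 1 + m * q" using kq unfolding m_def .
  note ctx = r5 kq e2 eV finV cardV
  define s where "s = (r-2)*q"
  define t where "t = card {T. twg r e' T q \<and> fst T = V'}"
  define N where "N = (r-2)*k"
  let ?B = "{T. btwg r e T k \<and> fst T = V}"
  let ?S = "Str r q e V"
  let ?f = "\<lambda>(K,F). Phi (edges_of K - {e}) F"
  have bij: "bij_betw ?f ?S ?B"
    unfolding bij_betw_def
  proof
    show "inj_on ?f ?S"
    proof (rule inj_onI)
      fix x y assume x: "x \<in> ?S" and y: "y \<in> ?S" and xy: "?f x = ?f y"
      obtain K F where xx: "x = (K,F)" by (cases x)
      obtain K' F' where yy: "y = (K',F')" by (cases y)
      have "K = K' \<and> F = F'"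
        by (rule str_inj[OF ctx]) (use x y xy xx yy in auto)
      then show "x = y" using xx yy by simp
    qed
    show "?f ` ?S = ?B"
    proof
      show "?f ` ?S \<subseteq> ?B"
      proof
        fix T assume "T \<in> ?f ` ?S"
        then obtain x where x: "x \<in> ?S" "T = ?f x" by blast
        obtain K F where xx: "x = (K,F)" by (cases x)
        have KF: "(K,F) \<in> ?S" using x xx by simp
        have "btwg r e (Phi (edges_of K - {e}) F) k" by (rule str_btwg[OF ctx KF])
        moreover have "fst (Phi (edges_of K - {e}) F) = V" by (rule str_V[OF ctx KF])
        ultimately show "T \<in> ?B" using x xx by simp
      qed
      show "?B \<subseteq> ?f ` ?S"
      proof
        fix T assume "T \<in> ?B"
        then have "btwg r e T k" "fst T = V" by auto
        then obtain K F where KF: "(K,F) \<in> ?S" "T = Phi (edges_of K - {e}) F"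
          using str_surj[OF ctx] by blast
        then show "T \<in> ?f ` ?S" by force
      qed
    qed
  qed
  have cB: "card ?B = card ?S" using bij_betw_same_card[OF bij] by simp
  let ?Ks = "{K. K \<subseteq> V \<and> e \<subseteq> K \<and> card K = r}"
  define P where "P = (\<Prod>i<m. (m*s - i*s) choose s)"
  have fKs: "finite ?Ks"
  proof -
    have "?Ks \<subseteq> Pow V" by blast
    moreover have "finite (Pow V)" using finV by simp
    ultimately show ?thesis by (rule finite_subset)
  qed
  have famK: "finite (Fam r q s (edges_of K - {e}) (V - K)) \<and> card (Fam r q s (edges_of K - {e}) (V - K)) = P * t ^ m"
    if K: "K \<in> ?Ks" for K
  proof -
    have KV: "K \<subseteq> V" and eK: "e \<subseteq> K" and cK: "card K = r" using K by auto
    have fK: "finite K" using finite_subset[OF KV finV] .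
    have cE: "card (edges_of K - {e}) = m" using card_E[OF ctx fK cK eK] unfolding m_def .
    have fE: "finite (edges_of K - {e})" using finite_edges_of[OF fK] by simp
    have cVK: "card (V - K) = m * s"
    proof -
      have "card (V - K) = card V - card K" using card_Diff_subset[OF fK KV] .
      also have "\<dots> = m * s"
      proof -
        have "(r-2)*k + 2 = r + m * s" using arith_k[OF ctx] unfolding m_def s_def .
        then show ?thesis unfolding cardV cK by simp
      qed
      finally show ?thesis .
    qed
    have c1: "finite (V - K)" using finV by simp
    have c2: "\<forall>h\<in>edges_of K - {e}. card h = 2 \<and> h \<inter> (V - K) = {}" by (auto simp: edges_of_iff)
    have c3: "\<forall>h\<in>edges_of K - {e}. \<forall>Q. Q \<subseteq> V - K \<longrightarrow> card Q = s \<longrightarrow> card {T. twg r h T q \<and> fst T = h \<union> Q} = t"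
    proof (intro ballI allI impI)
      fix h Q assume h: "h \<in> edges_of K - {e}" and Q: "Q \<subseteq> V - K" "card Q = s"
      have h2: "card h = 2" "h \<subseteq> K" using h by (auto simp: edges_of_iff)
      have fQ: "finite Q" using finite_subset[OF Q(1)] finV by simp
      have hQ: "h \<inter> Q = {}" using h2(2) Q(1) by blast
      have "card V' = card Q + 2" using cV' Q(2) unfolding s_def by simp
      then show "card {T. twg r h T q \<and> fst T = h \<union> Q} = t"
        unfolding t_def by (rule count_relabel[OF r3 h2(1) fQ hQ e'2 e'V' fV'])
    qed
    have "finite (Fam r q s (edges_of K - {e}) (V - K)) \<and> card (Fam r q s (edges_of K - {e}) (V - K)) =
       (\<Prod>i<card (edges_of K - {e}). (card (V - K) - i*s) choose s) * t ^ card (edges_of K - {e})"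
      using mp[OF mp[OF mp[OF spec[OF fam_count[OF r3 fE, where s=s and t=t and q=q], of "V - K"] c1] c2] c3] .
    then show ?thesis unfolding cE cVK P_def .
  qed
  have cS: "card ?S = card ?Ks * (P * t ^ m)"
  proof -
    have "card ?S = (\<Sum>K\<in>?Ks. card (Fam r q s (edges_of K - {e}) (V - K)))"
      unfolding Str_def s_def[symmetric] using fKs famK by (intro card_SigmaI) auto
    also have "\<dots> = (\<Sum>K\<in>?Ks. P * t ^ m)" using famK by (intro sum.cong) auto
    finally show ?thesis by simp
  qed
  have cKs: "card ?Ks = N choose (r-2)"
  proof -
    let ?W = "{W. W \<subseteq> V - e \<and> card W = r - 2}"
    have fe: "finite e" using finite_subset[OF eV finV] .
    have "bij_betw (\<lambda>K. K - e) ?Ks ?W"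
    proof (rule bij_betw_byWitness[where f' = "\<lambda>W. W \<union> e"])
      show "\<forall>a\<in>?Ks. a - e \<union> e = a" by auto
      show "\<forall>a\<in>?W. a \<union> e - e = a" by auto
      show "(\<lambda>K. K - e) ` ?Ks \<subseteq> ?W"
      proof
        fix W assume "W \<in> (\<lambda>K. K - e) ` ?Ks"
        then obtain K where K: "K \<subseteq> V" "e \<subseteq> K" "card K = r" "W = K - e" by blast
        have "card (K - e) = r - 2" using card_Diff_subset[OF fe K(2)] K(3) e2 by simp
        then show "W \<in> ?W" using K by auto
      qed
      show "(\<lambda>W. W \<union> e) ` ?W \<subseteq> ?Ks"
      proof
        fix K assume "K \<in> (\<lambda>W. W \<union> e) ` ?W"
        then obtain W where W: "W \<subseteq> V - e" "card W = r - 2" "K = W \<union> e" by blast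
        have fW: "finite W" using finite_subset[OF W(1)] finV by simp
        have "card (W \<union> e) = card W + card e" by (rule card_Un_disjoint[OF fW fe]) (use W(1) in blast)
        then have "card K = r" using W(2,3) e2 r3 by simp
        then show "K \<in> ?Ks" using W eV by auto
      qed
    qed
    then have "card ?Ks = card ?W" by (rule bij_betw_same_card)
    also have "\<dots> = card (V - e) choose (r - 2)" using n_subsets[of "V - e" "r - 2"] finV by simp
    also have "card (V - e) = N" using card_Diff_subset[OF fe eV] cardV e2 unfolding N_def by simp
    finally show ?thesis .
  qed
  have NM: "N - (r - 2) = m * s"
  proof -
    define p where "p = r - 2"
    have "N = p + m * s" unfolding N_def s_def kq' p_def[symmetric] by (simp add: algebra_simps)
    then show ?thesis unfolding p_def by simp
  qed
  have rN: "r - 2 \<le> N" unfolding N_def using assms(2) by simp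
  have hC: "real (N choose (r-2)) * fact (r-2) * fact (m*s) = fact N"
  proof -
    have "fact (r-2) * fact (N - (r-2)) * (N choose (r-2)) = (fact N :: nat)" by (rule binomial_fact_lemma[OF rN])
    then have "real (fact (r-2) * fact (m*s) * (N choose (r-2))) = real (fact N :: nat)" unfolding NM by simp
    then show ?thesis by (simp add: of_nat_mult algebra_simps)
  qed
  have hP: "real P * fact s ^ m = fact (m*s)"
  proof -
    have "P * fact s ^ m * fact (m*s - m*s) = (fact (m*s) :: nat)" unfolding P_def by (rule prod_choose) simp
    then have "real (P * fact s ^ m) = real (fact (m*s) :: nat)" by simp
    then show ?thesis by (simp add: of_nat_mult)
  qed
  have fin: "real (card ?B) = fact N / fact (r - 2) * (real t / fact s) ^ m"
  proof -
    have "real (card ?B) = real (N choose (r-2)) * (real P * real t ^ m)" using cB cS cKs by simp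
    also have "\<dots> = (real (N choose (r-2)) * fact (r-2) * fact (m*s)) / fact (r-2) * (real t ^ m / fact s ^ m)"
      unfolding hP[symmetric] by (simp add: field_simps)
    also have "\<dots> = fact N / fact (r - 2) * (real t / fact s) ^ m" unfolding hC by (simp add: power_divide)
    finally show ?thesis .
  qed
  then show "real (card ?B) = fact ((r - 2) * k) / fact (r - 2) *
       (real (card {T. twg r e' T q \<and> fst T = V'}) / fact ((r - 2) * q)) ^ ((r choose 2) - 1)"
    unfolding N_def t_def s_def m_def .
qed

end
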